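(* Let $n\ge 1$ and $d\ge 2$ be integers, and let $\Upsilon$ be the Choi state of an $n$-step process tensor, i.e. a density operator on $\mathcal{H}_{\mathrm{i}_0}\otimes\mathcal{H}_{\mathrm{o}_1}\otimes\cdots\otimes\mathcal{H}_{\mathrm{i}_{n-1}}\otimes\mathcal{H}_{\mathrm{o}_n}$ (every factor of dimension $d$) satisfying the time-ordering trace conditions described in the context. With $\mathrm{M}_j$, $\mathrm{N}$ as in the context and $\overline{\mathrm{M}_j}=2\ln d-\mathrm{M}_j$, for every $1\le k\le n$, $$\mathrm{N}\le 2\sum_{j<k}\overline{\mathrm{M}_j}+\sum_{j>k}\overline{\mathrm{M}_j}.$$
   Context: For $0\le j\le n$ let $\Upsilon_{1:j}$ be the partial trace of $\Upsilon$ over the factors $\mathrm{i}_j,\mathrm{o}_{j+1},\mathrm{i}_{j+1},\dots,\mathrm{i}_{n-1},\mathrm{o}_n$ (so $\Upsilon_{1:n}=\Upsilon$ and $\Upsilon_{1:0}=1$). The time-ordering (and trace-preservation) conditions are: for all $1\le j\le n$, $\mathrm{tr}_{\mathrm{o}_j}[\Upsilon_{1:j}]=\Upsilon_{1:j-1}\otimes \mathbb{I}_{\mathrm{i}_{j-1}}/d$. Entropies are von Neumann entropies with natural logarithm; $S_X$ is the entropy of the reduced state of $\Upsilon$ on the factors $X$; $S_j$ is the entropy of the marginal on $\mathrm{i}_{j-1}\mathrm{o}_j$; $S_{1:n}=S(\Upsilon)$. Define $\mathrm{M}_j=S_{\mathrm{i}_{j-1}}+S_{\mathrm{o}_j}-S_j$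 (Markovian correlation of step $j$) and $\mathrm{N}=\sum_{j=1}^n S_j-S_{1:n}$ (non-Markovian correlation). *)

theory Defs
  imports Complex_Main "Jordan_Normal_Form.Jordan_Normal_Form" "Jordan_Normal_Form.Schur_Decomposition"
begin

(* The Hilbert space has N = 2n factors, each of
   dimension d, numbered 0..N-1 in the order i_0, o_1, i_1, o_2, ..., i_{n-1}, o_n:
   factor 2(j-1) is i_{j-1} and factor 2j-1 is o_j.  A basis index x < d^N of the
   full space is the d-ary number whose p-th most significant digit is the basis
   index in factor p (standard Kronecker ordering). *)

definition digit :: "nat \<Rightarrow> nat \<Rightarrow> nat \<Rightarrow> nat \<Rightarrow> nat" where
  "digit d m p x = (x div d ^ (m - 1 - p)) mod d"

definition enc :: "nat \<Rightarrow> nat \<Rightarrow> (nat \<Rightarrow> nat) \<Rightarrow> nat" where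
  "enc d m f = (\<Sum>p<m. f p * d ^ (m - 1 - p))"

(* digit assignment to all N factors: kept factors S read their digits from a
   (index into the reduced space, factors in increasing order), the traced-out
   factors read theirs from c *)
definition assign :: "nat \<Rightarrow> nat \<Rightarrow> nat set \<Rightarrow> nat \<Rightarrow> nat \<Rightarrow> nat \<Rightarrow> nat" where
  "assign d N S a c = (\<lambda>k.
     let C = {0..<N} - S in
     if k \<in> S then digit d (card S) (card {s \<in> S. s < k}) a
     else digit d (card C) (card {s \<in> C. s < k}) c)"

definition marg :: "nat \<Rightarrow> nat \<Rightarrow> nat set \<Rightarrow> complex mat \<Rightarrow> complex mat" where
  "marg d N S U =
     (let m = card S in
      mat (d ^ m) (d ^ m) (\<lambda>(a, b).
        \<Sum>c < d ^ (N - m). U $$ (enc d N (assign d N S a c), enc d N (assign d N S b c))))"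

definition hermitian :: "complex mat \<Rightarrow> bool" where
  "hermitian A \<longleftrightarrow> mat_adjoint A = A"

definition psd :: "complex mat \<Rightarrow> bool" where
  "psd A \<longleftrightarrow> (\<forall>v \<in> carrier_vec (dim_row A). 0 \<le> Re (conjugate v \<bullet> (A *\<^sub>v v)))"

definition mtrace :: "complex mat \<Rightarrow> complex" where
  "mtrace A = (\<Sum>i<dim_row A. A $$ (i, i))"

definition density_op :: "nat \<Rightarrow> complex mat \<Rightarrow> bool" where
  "density_op D A \<longleftrightarrow> A \<in> carrier_mat D D \<and> hermitian A \<and> psd A \<and> mtrace A = 1"

definition eig_mset :: "complex mat \<Rightarrow> complex multiset" where
  "eig_mset A = (SOME M. char_poly A = (\<Prod>a\<in>#M. [:- a, 1:]))"

(* von Neumann entropy with natural logarithm (note ln 0 = 0, so 0 ln 0 = 0) *)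
definition vN_entropy :: "complex mat \<Rightarrow> real" where
  "vN_entropy A = - (\<Sum>a\<in>#eig_mset A. Re a * ln (Re a))"

(* time-ordering / trace-preservation conditions:
   tr_{o_j}[U_{1:j}] = U_{1:j-1} \<otimes> I_{i_{j-1}}/d, where U_{1:j} = marg on factors {0..<2j}.
   The right-hand side Kronecker product is written out entrywise
   (i_{j-1} = factor 2j-2 is the last, least significant factor). *)
definition time_ordered :: "nat \<Rightarrow> nat \<Rightarrow> complex mat \<Rightarrow> bool" where
  "time_ordered d n U \<longleftrightarrow>
     (\<forall>j \<in> {1..n}. \<forall>a < d ^ (2*j - 1). \<forall>b < d ^ (2*j - 1).
        marg d (2*n) {0..<2*j-1} U $$ (a, b) =
        marg d (2*n) {0..<2*j-2} U $$ (a div d, b div d) *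
          (if a mod d = b mod d then 1 / of_nat d else 0))"

definition process_tensor :: "nat \<Rightarrow> nat \<Rightarrow> complex mat \<Rightarrow> bool" where
  "process_tensor d n U \<longleftrightarrow> density_op (d ^ (2*n)) U \<and> time_ordered d n U"

definition S_in :: "nat \<Rightarrow> nat \<Rightarrow> complex mat \<Rightarrow> nat \<Rightarrow> real" where
  "S_in d n U j = vN_entropy (marg d (2*n) {2*j-2} U)"
definition S_out :: "nat \<Rightarrow> nat \<Rightarrow> complex mat \<Rightarrow> nat \<Rightarrow> real" where
  "S_out d n U j = vN_entropy (marg d (2*n) {2*j-1} U)"
definition S_step :: "nat \<Rightarrow> nat \<Rightarrow> complex mat \<Rightarrow> nat \<Rightarrow> real" where
  "S_step d n U j = vN_entropy (marg d (2*n) {2*j-2, 2*j-1} U)"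

definition Mcorr :: "nat \<Rightarrow> nat \<Rightarrow> complex mat \<Rightarrow> nat \<Rightarrow> real" where
  "Mcorr d n U j = S_in d n U j + S_out d n U j - S_step d n U j"

definition Mbar :: "nat \<Rightarrow> nat \<Rightarrow> complex mat \<Rightarrow> nat \<Rightarrow> real" where
  "Mbar d n U j = 2 * ln (real d) - Mcorr d n U j"

definition Ncorr :: "nat \<Rightarrow> nat \<Rightarrow> complex mat \<Rightarrow> real" where
  "Ncorr d n U = (\<Sum>j=1..n. S_step d n U j) - vN_entropy U"

end

theory Submission
  imports Defs
begin


lemma mult_entry:
  assumes "A \<in> carrier_mat n m" "B \<in> carrier_mat m p" "i < n" "j < p"
  shows "(A * B) $$ (i,j) = (\<Sum>k<m. A $$ (i,k) * B $$ (k,j))"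
  using assms by (auto simp: scalar_prod_def atLeast0LessThan intro!: sum.cong)

lemma multv_entry:
  assumes "A \<in> carrier_mat n m" "v \<in> carrier_vec m" "i < n"
  shows "(A *\<^sub>v v) $ i = (\<Sum>k<m. A $$ (i,k) * v $ k)"
  using assms by (auto simp: scalar_prod_def atLeast0LessThan intro!: sum.cong)

definition onb :: "nat \<Rightarrow> nat \<Rightarrow> (nat \<Rightarrow> nat \<Rightarrow> complex) \<Rightarrow> bool" where
  "onb n k v \<longleftrightarrow> (\<forall>i<k. \<forall>j<k. (\<Sum>x<n. cnj (v i x) * v j x) = (if i = j then 1 else 0))"

definition eigs :: "nat \<Rightarrow> nat \<Rightarrow> complex mat \<Rightarrow> (nat \<Rightarrow> nat \<Rightarrow> complex) \<Rightarrow> (nat \<Rightarrow> real) \<Rightarrow> bool" where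
  "eigs n k A v l \<longleftrightarrow> (\<forall>i<k. \<forall>x<n. (\<Sum>y<n. A $$ (x,y) * v i y) = of_real (l i) * v i x)"

lemma onb_complete:
  assumes "onb n n v" "x < n" "y < n"
  shows "(\<Sum>i<n. v i x * cnj (v i y)) = (if x = y then 1 else 0)"
proof -
  define V where "V = mat n n (\<lambda>(x,i). v i x)"
  define W where "W = mat n n (\<lambda>(i,x). cnj (v i x))"
  have V: "V \<in> carrier_mat n n" and W: "W \<in> carrier_mat n n" unfolding V_def W_def by auto
  have "W * V = 1\<^sub>m n"
  proof (rule eq_matI)
    fix i j assume "i < dim_row (1\<^sub>m n)" "j < dim_col (1\<^sub>m n)"
    then have ij: "i < n" "j < n" by auto
    show "(W * V) $$ (i, j) = 1\<^sub>m n $$ (i, j)"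
      unfolding mult_entry[OF W V ij] using assms(1) ij by (simp add: V_def W_def onb_def)
  qed (use V W in auto)
  then have "V * W = 1\<^sub>m n" using mat_mult_left_right_inverse[OF W V] by simp
  then have "(V * W) $$ (x,y) = 1\<^sub>m n $$ (x,y)" by simp
  then show ?thesis unfolding mult_entry[OF V W assms(2,3)] using assms(2,3) by (simp add: V_def W_def)
qed


lemma eig_decomp:
  assumes A: "A \<in> carrier_mat n n" and o: "onb n n v" and e: "eigs n n A v l"
    and xy: "x < n" "y < n"
  shows "A $$ (x,y) = (\<Sum>i<n. of_real (l i) * v i x * cnj (v i y))"
proof -
  have "(\<Sum>i<n. of_real (l i) * v i x * cnj (v i y)) = (\<Sum>i<n. (\<Sum>z<n. A $$ (x,z) * v i z) * cnj (v i y))"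
    using e xy by (simp add: eigs_def)
  also have "\<dots> = (\<Sum>z<n. A $$ (x,z) * (\<Sum>i<n. v i z * cnj (v i y)))"
    unfolding sum_distrib_right sum_distrib_left
    by (subst sum.swap) (simp add: mult.assoc)
  also have "\<dots> = (\<Sum>z<n. A $$ (x,z) * (if z = y then 1 else 0))"
    using onb_complete[OF o] xy by (intro sum.cong) auto
  also have "\<dots> = A $$ (x,y)" using xy by (simp add: if_distrib cong: if_cong)
  finally show ?thesis by simp
qed

lemma lin_factors_inj:
  fixes M M' :: "complex multiset"
  assumes "(\<Prod>a\<in>#M. [:- a, 1:]) = (\<Prod>a\<in>#M'. [:- a, 1:])"
  shows "M = M'"
  using assms
proof (induction M arbitrary: M')
  case empty
  show ?case
  proof (rule ccontr)
    assume "{#} \<noteq> M'"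
    then obtain a M0 where "M' = add_mset a M0" by (metis multiset_cases)
    then have "poly (\<Prod>a\<in>#M'. [:- a, 1:]) a = 0" by simp
    with empty show False by simp
  qed
next
  case (add a M)
  have "poly (\<Prod>a\<in>#M'. [:- a, 1:]) a = 0" using add.prems[symmetric] by simp
  then have "a \<in># M'" by (auto simp: poly_prod_mset prod_mset_zero_iff)
  then obtain M0 where M': "M' = add_mset a M0" by (metis multi_member_split)
  have "[:- a, 1:] * (\<Prod>a\<in>#M. [:- a, 1:]) = [:- a, 1:] * (\<Prod>a\<in>#M0. [:- a, 1:])"
    using add.prems M' by simp
  then have "(\<Prod>a\<in>#M. [:- a, 1:]) = (\<Prod>a\<in>#M0. [:- a, 1:])"
    by (metis mult_cancel_left pCons_eq_0_iff zero_neq_one)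
  then show ?case using add.IH M' by simp
qed

lemma prod_list_mset: "prod_list (map h xs) = prod_mset (image_mset h (mset xs))"
  by (induction xs) auto

lemma eig_mset_onb:
  assumes A: "A \<in> carrier_mat n n" and o: "onb n n v" and e: "eigs n n A v l"
  shows "eig_mset A = image_mset (\<lambda>i. complex_of_real (l i)) (mset_set {..<n})"
proof -
  define V where "V = mat n n (\<lambda>(x,i). v i x)"
  define W where "W = mat n n (\<lambda>(i,x). cnj (v i x))"
  define D where "D = mat n n (\<lambda>(i,j). if i = j then complex_of_real (l i) else 0)"
  have V: "V \<in> carrier_mat n n" and W: "W \<in> carrier_mat n n" and D: "D \<in> carrier_mat n n"
    unfolding V_def W_def D_def by auto
  have WV: "W * V = 1\<^sub>m n"
  proof (rule eq_matI)
    fix i j assume "i < dim_row (1\<^sub>m n)" "j < dim_col (1\<^sub>m n)"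
    then have ij: "i < n" "j < n" by auto
    show "(W * V) $$ (i, j) = 1\<^sub>m n $$ (i, j)"
      unfolding mult_entry[OF W V ij] using o ij by (simp add: V_def W_def onb_def)
  qed (use V W in auto)
  then have VW: "V * W = 1\<^sub>m n" using mat_mult_left_right_inverse[OF W V] by simp
  have VD: "V * D \<in> carrier_mat n n" using V D by auto
  have AVDW: "A = V * D * W"
  proof (rule eq_matI)
    fix x y assume "x < dim_row (V * D * W)" "y < dim_col (V * D * W)"
    then have xy: "x < n" "y < n" using V W by auto
    have "(V * D * W) $$ (x,y) = (\<Sum>k<n. (V * D) $$ (x,k) * W $$ (k,y))"
      by (rule mult_entry[OF VD W xy])
    also have "\<dots> = (\<Sum>k<n. (\<Sum>i<n. V $$ (x,i) * D $$ (i,k)) * W $$ (k,y))"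
      using mult_entry[OF V D] xy by (intro sum.cong) auto
    also have "\<dots> = (\<Sum>k<n. of_real (l k) * v k x * cnj (v k y))"
      using xy by (intro sum.cong) (auto simp: V_def D_def W_def if_distrib cong: if_cong)
    finally show "A $$ (x,y) = (V * D * W) $$ (x,y)" using eig_decomp[OF A o e xy] by simp
  qed (use A V D W in auto)
  have "similar_mat_wit A D V W"
    unfolding similar_mat_wit_def Let_def using A V D W VW WV AVDW by auto
  then have "similar_mat A D" unfolding similar_mat_def by blast
  then have "char_poly A = char_poly D" by (rule char_poly_similar)
  also have "\<dots> = (\<Prod>a\<leftarrow>diag_mat D. [:- a, 1:])"
  proof (rule char_poly_upper_triangular[OF D])
    show "upper_triangular D" unfolding upper_triangular_def D_def by auto
  qed
  also have "diag_mat D = map (\<lambda>i. complex_of_real (l i)) [0..<n]"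
    unfolding diag_mat_def D_def by auto
  finally have cp: "char_poly A = (\<Prod>a\<in>#image_mset (\<lambda>i. complex_of_real (l i)) (mset_set {..<n}). [:- a, 1:])"
    unfolding prod_list_mset by (simp add: mset_upt atLeast0LessThan multiset.map_comp)
  have "\<exists>M. char_poly A = (\<Prod>a\<in>#M. [:- a, 1:])" using cp by blast
  then have "char_poly A = (\<Prod>a\<in>#eig_mset A. [:- a, 1:])"
    unfolding eig_mset_def by (rule someI_ex)
  then show ?thesis using cp lin_factors_inj by metis
qed

lemma entropy_onb:
  assumes A: "A \<in> carrier_mat n n" and o: "onb n n v" and e: "eigs n n A v l"
  shows "vN_entropy A = - (\<Sum>i<n. l i * ln (l i))"
proof -
  have "vN_entropy A = - (\<Sum>a\<in>#image_mset (\<lambda>i. complex_of_real (l i)) (mset_set {..<n}). Re a * ln (Re a))"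
    unfolding vN_entropy_def eig_mset_onb[OF A o e] ..
  also have "\<dots> = - (\<Sum>i<n. l i * ln (l i))"
    by (simp add: sum_unfold_sum_mset multiset.map_comp comp_def)
  finally show ?thesis .
qed


definition herm :: "nat \<Rightarrow> complex mat \<Rightarrow> bool" where
  "herm n A \<longleftrightarrow> (\<forall>i<n. \<forall>j<n. A $$ (i,j) = cnj (A $$ (j,i)))"

lemma hermD: "herm n A \<Longrightarrow> i < n \<Longrightarrow> j < n \<Longrightarrow> A $$ (i,j) = cnj (A $$ (j,i))"
  unfolding herm_def by blast

lemma trace_sim:
  fixes X P Q :: "complex mat"
  assumes X: "X \<in> carrier_mat n n" and P: "P \<in> carrier_mat n n" and Q: "Q \<in> carrier_mat n n"
    and QP: "Q * P = 1\<^sub>m n"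
  shows "(\<Sum>i<n. (P * X * Q) $$ (i,i)) = (\<Sum>i<n. X $$ (i,i))"
proof -
  have PX: "P * X \<in> carrier_mat n n" using P X by auto
  have qp: "(\<Sum>i<n. Q $$ (l,i) * P $$ (i,k)) = (if l = k then 1 else 0)" if "l < n" "k < n" for l k
  proof -
    have "(Q * P) $$ (l,k) = 1\<^sub>m n $$ (l,k)" using QP by simp
    then show ?thesis using mult_entry[OF Q P that] that by simp
  qed
  have "(\<Sum>i<n. (P * X * Q) $$ (i,i)) = (\<Sum>i<n. \<Sum>l<n. (\<Sum>k<n. P $$ (i,k) * X $$ (k,l)) * Q $$ (l,i))"
    by (intro sum.cong refl, subst mult_entry[OF PX Q], simp_all, intro sum.cong refl, subst mult_entry[OF P X], auto)
  also have "\<dots> = (\<Sum>k<n. \<Sum>l<n. X $$ (k,l) * (\<Sum>i<n. Q $$ (l,i) * P $$ (i,k)))"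
  proof -
    have "(\<Sum>i<n. \<Sum>l<n. (\<Sum>k<n. P $$ (i,k) * X $$ (k,l)) * Q $$ (l,i))
        = (\<Sum>i<n. \<Sum>l<n. \<Sum>k<n. X $$ (k,l) * (Q $$ (l,i) * P $$ (i,k)))"
      apply (simp add: sum_distrib_right) apply (intro sum.cong refl) by (simp add: mult_ac)
    also have "\<dots> = (\<Sum>l<n. \<Sum>i<n. \<Sum>k<n. X $$ (k,l) * (Q $$ (l,i) * P $$ (i,k)))"
      by (rule sum.swap)
    also have "\<dots> = (\<Sum>l<n. \<Sum>k<n. \<Sum>i<n. X $$ (k,l) * (Q $$ (l,i) * P $$ (i,k)))"
      by (rule sum.cong[OF refl], rule sum.swap)
    also have "\<dots> = (\<Sum>k<n. \<Sum>l<n. \<Sum>i<n. X $$ (k,l) * (Q $$ (l,i) * P $$ (i,k)))"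
      by (rule sum.swap)
    finally show ?thesis by (simp add: sum_distrib_left)
  qed
  also have "\<dots> = (\<Sum>k<n. \<Sum>l<n. X $$ (k,l) * (if l = k then 1 else 0))"
    using qp by (intro sum.cong refl) auto
  also have "\<dots> = (\<Sum>k<n. X $$ (k,k))"
    by (intro sum.cong refl) (simp add: if_distrib cong: if_cong)
  finally show ?thesis .
qed

lemma herm_nilp_zero:
  assumes A: "A \<in> carrier_mat n n" and h: "herm n A"
    and ev: "\<And>e. eigenvalue A e \<Longrightarrow> e = 0"
    and ij: "i < n" "j < n"
  shows "A $$ (i,j) = 0"
proof -
  from char_poly_factorized[OF A] obtain es where cp: "char_poly A = (\<Prod>a\<leftarrow>es. [:- a, 1:])"
    by (elim exE conjE)
  obtain B P Q where sd: "schur_decomposition A es = (B,P,Q)" by (metis prod_cases3)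
  from schur_decomposition[OF A cp sd]
  have sim: "similar_mat_wit A B P Q" and ut: "upper_triangular B" and dg: "diag_mat B = es" by auto
  have dA: "dim_row A = n" using A by auto
  from sim have B: "B \<in> carrier_mat n n" and P: "P \<in> carrier_mat n n" and Q: "Q \<in> carrier_mat n n"
    and QP: "Q * P = 1\<^sub>m n" and APBQ: "A = P * B * Q"
    unfolding similar_mat_wit_def Let_def dA by auto
  have Bdiag: "B $$ (i,i) = 0" if "i < n" for i
  proof -
    have "B $$ (i,i) \<in> set es" using dg B that unfolding diag_mat_def by auto
    then have "poly (char_poly A) (B $$ (i,i)) = 0" unfolding cp
      by (induction es) auto
    then have "eigenvalue A (B $$ (i,i))" using eigenvalue_root_char_poly[OF A] by simp
    then show ?thesis using ev by simp
  qed
  have BB: "B * B \<in> carrier_mat n n" using B by auto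
  have AA: "A * A = P * (B * B) * Q"
    using similar_mat_wit_pow_id[OF sim, of 2] A B by (simp add: numeral_2_eq_2)
  have "(\<Sum>i<n. (A * A) $$ (i,i)) = (\<Sum>i<n. (B * B) $$ (i,i))"
    unfolding AA by (rule trace_sim[OF BB P Q QP])
  also have "\<dots> = (\<Sum>i<n. \<Sum>k<n. B $$ (i,k) * B $$ (k,i))"
    by (intro sum.cong refl, rule mult_entry[OF B B]) auto
  also have "\<dots> = 0"
  proof (intro sum.neutral ballI)
    fix i k assume "i \<in> {..<n}" "k \<in> {..<n}"
    then have ik: "i < n" "k < n" by auto
    show "B $$ (i,k) * B $$ (k,i) = 0"
    proof (cases "i = k")
      case True then show ?thesis using Bdiag ik by simp
    next
      case False
      then have "k < i \<or> i < k" by arith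
      then show ?thesis using ut B ik unfolding upper_triangular_def by auto
    qed
  qed
  finally have tr0: "(\<Sum>i<n. (A * A) $$ (i,i)) = 0" .
  have "(\<Sum>i<n. (A * A) $$ (i,i)) = (\<Sum>i<n. \<Sum>k<n. complex_of_real ((cmod (A $$ (i,k)))\<^sup>2))"
  proof (intro sum.cong refl)
    fix i assume i: "i \<in> {..<n}"
    have "(A * A) $$ (i,i) = (\<Sum>k<n. A $$ (i,k) * A $$ (k,i))" using i by (subst mult_entry[OF A A]) auto
    also have "\<dots> = (\<Sum>k<n. complex_of_real ((cmod (A $$ (i,k)))\<^sup>2))"
    proof (intro sum.cong refl)
      fix k assume k: "k \<in> {..<n}"
      have hk: "A $$ (k,i) = cnj (A $$ (i,k))" using hermD[OF h, of k i] i k by simp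
      show "A $$ (i,k) * A $$ (k,i) = complex_of_real ((cmod (A $$ (i,k)))\<^sup>2)"
        by (simp only: hk complex_norm_square)
    qed
    finally show "(A * A) $$ (i,i) = (\<Sum>k<n. complex_of_real ((cmod (A $$ (i,k)))\<^sup>2))" .
  qed
  then have "(\<Sum>i<n. \<Sum>k<n. (cmod (A $$ (i,k)))\<^sup>2) = 0" using tr0
    by (metis (no_types, lifting) of_real_eq_0_iff of_real_sum sum.cong)
  then have "\<forall>i\<in>{..<n}. (\<Sum>k<n. (cmod (A $$ (i,k)))\<^sup>2) = 0"
    using sum_nonneg_eq_0_iff[of "{..<n}" "\<lambda>i. \<Sum>k<n. (cmod (A $$ (i,k)))\<^sup>2"]
    by (simp add: sum_nonneg)
  then have "\<forall>k\<in>{..<n}. (cmod (A $$ (i,k)))\<^sup>2 = 0" using ij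
    using sum_nonneg_eq_0_iff[of "{..<n}" "\<lambda>k. (cmod (A $$ (i,k)))\<^sup>2"] by simp
  then have "(cmod (A $$ (i,j)))\<^sup>2 = 0" using ij by simp
  then show ?thesis by simp
qed


lemma herm_eig_real:
  assumes h: "herm n A" and ev: "\<forall>a<n. (\<Sum>b<n. A $$ (a,b) * x b) = e * x a"
    and nz: "\<exists>a<n. x a \<noteq> 0"
  shows "Im e = 0"
proof -
  define s where "s = (\<Sum>a<n. cnj (x a) * (\<Sum>b<n. A $$ (a,b) * x b))"
  define r where "r = (\<Sum>a<n. (cmod (x a))\<^sup>2)"
  have s1: "s = e * of_real r"
  proof -
    have "s = (\<Sum>a<n. e * (cnj (x a) * x a))" unfolding s_def using ev by (intro sum.cong) auto
    also have "\<dots> = e * of_real r" unfolding r_def of_real_sum sum_distrib_left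
      by (intro sum.cong refl) (simp only: complex_norm_square mult.commute)
    finally show ?thesis .
  qed
  have "cnj s = (\<Sum>a<n. x a * (\<Sum>b<n. cnj (A $$ (a,b)) * cnj (x b)))"
    unfolding s_def by simp
  also have "\<dots> = (\<Sum>a<n. \<Sum>b<n. x a * A $$ (b,a) * cnj (x b))"
  proof (intro sum.cong refl)
    fix a assume a: "a \<in> {..<n}"
    have "x a * (\<Sum>b<n. cnj (A $$ (a,b)) * cnj (x b)) = (\<Sum>b<n. x a * (cnj (A $$ (a,b)) * cnj (x b)))"
      by (simp add: sum_distrib_left)
    also have "\<dots> = (\<Sum>b<n. x a * A $$ (b,a) * cnj (x b))"
    proof (intro sum.cong refl)
      fix b assume b: "b \<in> {..<n}"
      have "A $$ (b,a) = cnj (A $$ (a,b))" using hermD[OF h, of b a] a b by simp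
      then show "x a * (cnj (A $$ (a,b)) * cnj (x b)) = x a * A $$ (b,a) * cnj (x b)"
        by (simp only: mult.assoc)
    qed
    finally show "x a * (\<Sum>b<n. cnj (A $$ (a,b)) * cnj (x b)) = (\<Sum>b<n. x a * A $$ (b,a) * cnj (x b))" .
  qed
  also have "\<dots> = (\<Sum>b<n. \<Sum>a<n. x a * A $$ (b,a) * cnj (x b))" by (rule sum.swap)
  also have "\<dots> = s" unfolding s_def
    by (intro sum.cong refl) (simp add: sum_distrib_left mult_ac)
  finally have cs: "cnj s = s" .
  have rpos: "r > 0"
  proof -
    obtain a where a: "a < n" "x a \<noteq> 0" using nz by blast
    have "(cmod (x a))\<^sup>2 > 0" using a by simp
    moreover have "(cmod (x a))\<^sup>2 \<le> r" unfolding r_def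
      using a by (intro member_le_sum) auto
    ultimately show ?thesis by linarith
  qed
  have "cnj e * of_real r = e * of_real r" using cs s1 by simp
  then have "cnj e = e" using rpos by simp
  then show ?thesis by (metis cnj.simps(2) complex_cnj_cancel_iff complex_eq_iff neg_equal_zero)
qed


lemma if01_mult: "(if P then 1 else 0) * (z::'a::semiring_1) = (if P then z else 0)"
  "z * (if P then 1 else 0) = (if P then z else 0)" by simp_all

lemma find_orth_eig:
  assumes A: "A \<in> carrier_mat n n" and h: "herm n A"
    and o: "onb n k v" and e: "eigs n k A v l" and kn: "k < n"
  shows "\<exists>x c. (\<exists>a<n. x a \<noteq> 0) \<and> (\<forall>j<k. (\<Sum>a<n. cnj (v j a) * x a) = 0)
     \<and> (\<forall>a<n. (\<Sum>b<n. A $$ (a,b) * x b) = c * x a)"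
proof -
  define Qm where "Qm a b = (if a = b then 1 else 0) - (\<Sum>i<k. v i a * cnj (v i b))" for a b
  have oo: "(\<Sum>a<n. cnj (v j a) * v i a) = (if j = i then 1 else 0)" if "j < k" "i < k" for i j
    using o that unfolding onb_def by blast
  have L1: "(\<Sum>a<n. cnj (v j a) * Qm a b) = 0" if j: "j < k" and b: "b < n" for j b
  proof -
    have "(\<Sum>a<n. cnj (v j a) * Qm a b) = (\<Sum>a<n. cnj (v j a) * (if a = b then 1 else 0))
         - (\<Sum>a<n. \<Sum>i<k. cnj (v j a) * v i a * cnj (v i b))"
      unfolding Qm_def by (simp add: right_diff_distrib sum_subtractf sum_distrib_left mult.assoc)
    also have "(\<Sum>a<n. cnj (v j a) * (if a = b then 1 else 0)) = cnj (v j b)"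
      using b by (simp add: if01_mult sum.delta sum.delta')
    also have "(\<Sum>a<n. \<Sum>i<k. cnj (v j a) * v i a * cnj (v i b)) = (\<Sum>i<k. (\<Sum>a<n. cnj (v j a) * v i a) * cnj (v i b))"
      by (subst sum.swap) (simp add: sum_distrib_right)
    also have "\<dots> = (\<Sum>i<k. if j = i then cnj (v i b) else 0)"
      using oo j by (intro sum.cong refl) auto
    also have "\<dots> = cnj (v j b)" using j by (simp add: sum.delta)
    finally show ?thesis by simp
  qed
  have L2: "(\<Sum>a<n. cnj (v j a) * A $$ (a,b)) = of_real (l j) * cnj (v j b)" if j: "j < k" and b: "b < n" for j b
  proof -
    have "(\<Sum>a<n. cnj (v j a) * A $$ (a,b)) = (\<Sum>a<n. cnj (A $$ (b,a) * v j a))"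
    proof (intro sum.cong refl)
      fix a assume a: "a \<in> {..<n}"
      have "A $$ (a,b) = cnj (A $$ (b,a))" using hermD[OF h, of a b] a b by simp
      then show "cnj (v j a) * A $$ (a,b) = cnj (A $$ (b,a) * v j a)" by (simp only: complex_cnj_mult mult.commute)
    qed
    also have "\<dots> = cnj (\<Sum>a<n. A $$ (b,a) * v j a)" by simp
    also have "(\<Sum>a<n. A $$ (b,a) * v j a) = of_real (l j) * v j b" using e j b unfolding eigs_def by blast
    finally show ?thesis by simp
  qed
  have L3: "(\<Sum>b<n. Qm a b * y b) = y a" if c0: "\<forall>j<k. (\<Sum>b<n. cnj (v j b) * y b) = 0" and a: "a < n" for y a
  proof -
    have "(\<Sum>b<n. Qm a b * y b) = (\<Sum>b<n. (if a = b then 1 else 0) * y b) - (\<Sum>b<n. \<Sum>i<k. v i a * (cnj (v i b) * y b))"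
      unfolding Qm_def by (simp add: left_diff_distrib sum_subtractf sum_distrib_right mult.assoc)
    also have "(\<Sum>b<n. (if a = b then 1 else 0) * y b) = y a" using a by (simp add: if01_mult sum.delta sum.delta')
    also have "(\<Sum>b<n. \<Sum>i<k. v i a * (cnj (v i b) * y b)) = (\<Sum>i<k. v i a * (\<Sum>b<n. cnj (v i b) * y b))"
      by (subst sum.swap) (simp add: sum_distrib_left)
    also have "\<dots> = 0" using c0 by simp
    finally show ?thesis by simp
  qed
  have L4: "(\<Sum>a<n. cnj (v j a) * (\<Sum>b<n. A $$ (a,b) * y b)) = of_real (l j) * (\<Sum>b<n. cnj (v j b) * y b)"
    if j: "j < k" for j y
  proof -
    have "(\<Sum>a<n. cnj (v j a) * (\<Sum>b<n. A $$ (a,b) * y b)) = (\<Sum>b<n. (\<Sum>a<n. cnj (v j a) * A $$ (a,b)) * y b)"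
      by (simp add: sum_distrib_left sum_distrib_right mult.assoc) (rule sum.swap)
    also have "\<dots> = (\<Sum>b<n. of_real (l j) * cnj (v j b) * y b)"
      using L2 j by (intro sum.cong refl) auto
    finally show ?thesis by (simp add: sum_distrib_left mult.assoc)
  qed
  have L5: "(\<Sum>a<n. cnj (v j a) * (\<Sum>b<n. Qm a b * y b)) = 0" if j: "j < k" for j y
  proof -
    have "(\<Sum>a<n. cnj (v j a) * (\<Sum>b<n. Qm a b * y b)) = (\<Sum>b<n. (\<Sum>a<n. cnj (v j a) * Qm a b) * y b)"
      by (simp add: sum_distrib_left sum_distrib_right mult.assoc) (rule sum.swap)
    also have "\<dots> = 0" using L1 j by (intro sum.neutral) auto
    finally show ?thesis .
  qed
  have Qh: "cnj (Qm b a) = Qm a b" for a b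
    unfolding Qm_def by (auto simp: mult.commute)
  define C where "C = mat n n (\<lambda>(a,b). \<Sum>p<n. Qm a p * (\<Sum>q<n. A $$ (p,q) * Qm q b))"
  have C: "C \<in> carrier_mat n n" unfolding C_def by auto
  have Cent: "C $$ (a,b) = (\<Sum>p<n. Qm a p * (\<Sum>q<n. A $$ (p,q) * Qm q b))" if "a < n" "b < n" for a b
    using that unfolding C_def by auto
  have key: "\<forall>a<n. (\<Sum>b<n. A $$ (a,b) * x b) = c * x a"
    if c0: "\<forall>j<k. (\<Sum>a<n. cnj (v j a) * x a) = 0"
      and qa: "\<forall>a<n. (\<Sum>p<n. Qm a p * (\<Sum>q<n. A $$ (p,q) * x q)) = c * x a" for x c
  proof (intro allI impI)
    fix a assume a: "a < n"
    have "\<forall>j<k. (\<Sum>b<n. cnj (v j b) * (\<Sum>q<n. A $$ (b,q) * x q)) = 0"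
      using L4 c0 by simp
    then have "(\<Sum>p<n. Qm a p * (\<Sum>q<n. A $$ (p,q) * x q)) = (\<Sum>q<n. A $$ (a,q) * x q)"
      using L3[of "\<lambda>p. \<Sum>q<n. A $$ (p,q) * x q"] a by blast
    then show "(\<Sum>b<n. A $$ (a,b) * x b) = c * x a" using qa a by simp
  qed
  show ?thesis
  proof (cases "\<exists>c. eigenvalue C c \<and> c \<noteq> 0")
    case True
    then obtain c where ec: "eigenvalue C c" and c0: "c \<noteq> 0" by blast
    then obtain xv where xv: "xv \<in> carrier_vec n" "xv \<noteq> 0\<^sub>v n" "C *\<^sub>v xv = c \<cdot>\<^sub>v xv"
      unfolding eigenvalue_def eigenvector_def using C by auto
    define x where "x a = xv $ a" for a
    have nz: "\<exists>a<n. x a \<noteq> 0"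
    proof (rule ccontr)
      assume "\<not> ?thesis"
      then have "xv = 0\<^sub>v n" using xv(1) unfolding x_def by (intro eq_vecI) auto
      with xv(2) show False by simp
    qed
    have Cx: "(\<Sum>b<n. C $$ (a,b) * x b) = c * x a" if a: "a < n" for a
    proof -
      have "(C *\<^sub>v xv) $ a = (c \<cdot>\<^sub>v xv) $ a" using xv(3) by simp
      then show ?thesis using multv_entry[OF C xv(1) a] a xv(1) unfolding x_def by simp
    qed
    have R: "(\<Sum>b<n. C $$ (a,b) * x b) = (\<Sum>p<n. Qm a p * (\<Sum>q<n. A $$ (p,q) * (\<Sum>b<n. Qm q b * x b)))"
      if a: "a < n" for a
    proof -
      have "(\<Sum>b<n. C $$ (a,b) * x b) = (\<Sum>b<n. \<Sum>p<n. \<Sum>q<n. Qm a p * A $$ (p,q) * Qm q b * x b)"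
        using a by (intro sum.cong refl) (simp add: Cent sum_distrib_left sum_distrib_right mult.assoc)
      also have "\<dots> = (\<Sum>p<n. \<Sum>b<n. \<Sum>q<n. Qm a p * A $$ (p,q) * Qm q b * x b)" by (rule sum.swap)
      also have "\<dots> = (\<Sum>p<n. \<Sum>q<n. \<Sum>b<n. Qm a p * A $$ (p,q) * Qm q b * x b)"
        by (rule sum.cong[OF refl], rule sum.swap)
      also have "\<dots> = (\<Sum>p<n. Qm a p * (\<Sum>q<n. A $$ (p,q) * (\<Sum>b<n. Qm q b * x b)))"
        by (simp add: sum_distrib_left mult.assoc)
      finally show ?thesis .
    qed
    have orth: "\<forall>j<k. (\<Sum>a<n. cnj (v j a) * x a) = 0"
    proof (intro allI impI)
      fix j assume j: "j < k"
      have "c * (\<Sum>a<n. cnj (v j a) * x a) = (\<Sum>a<n. cnj (v j a) * (c * x a))"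
        by (simp add: sum_distrib_left mult_ac)
      also have "\<dots> = (\<Sum>a<n. cnj (v j a) * (\<Sum>p<n. Qm a p * (\<Sum>q<n. A $$ (p,q) * (\<Sum>b<n. Qm q b * x b))))"
        using Cx R by (intro sum.cong refl) auto
      also have "\<dots> = 0" by (rule L5[OF j])
      finally show "(\<Sum>a<n. cnj (v j a) * x a) = 0" using c0 by simp
    qed
    have Qx: "(\<Sum>b<n. Qm q b * x b) = x q" if "q < n" for q using L3[OF orth that] .
    have "\<forall>a<n. (\<Sum>p<n. Qm a p * (\<Sum>q<n. A $$ (p,q) * x q)) = c * x a"
    proof (intro allI impI)
      fix a assume a: "a < n"
      have "(\<Sum>p<n. Qm a p * (\<Sum>q<n. A $$ (p,q) * x q)) = (\<Sum>p<n. Qm a p * (\<Sum>q<n. A $$ (p,q) * (\<Sum>b<n. Qm q b * x b)))"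
        using Qx by simp
      also have "\<dots> = c * x a" using R[OF a] Cx[OF a] by simp
      finally show "(\<Sum>p<n. Qm a p * (\<Sum>q<n. A $$ (p,q) * x q)) = c * x a" .
    qed
    then show ?thesis using key[OF orth] nz orth by blast
  next
    case False
    have hC: "herm n C" unfolding herm_def
    proof (intro allI impI)
      fix a b assume a: "a < n" and b: "b < n"
      have "cnj (C $$ (b,a)) = (\<Sum>p<n. \<Sum>q<n. cnj (Qm b p) * cnj (A $$ (p,q)) * cnj (Qm q a))"
        using a b by (simp add: Cent sum_distrib_left mult.assoc)
      also have "\<dots> = (\<Sum>p<n. \<Sum>q<n. Qm a q * A $$ (q,p) * Qm p b)"
      proof (intro sum.cong refl)
        fix p q assume p: "p \<in> {..<n}" and q: "q \<in> {..<n}"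
        have "A $$ (q,p) = cnj (A $$ (p,q))" using hermD[OF h, of q p] p q by simp
        then show "cnj (Qm b p) * cnj (A $$ (p,q)) * cnj (Qm q a) = Qm a q * A $$ (q,p) * Qm p b"
          by (simp only: Qh mult.commute mult.left_commute)
      qed
      also have "\<dots> = (\<Sum>q<n. \<Sum>p<n. Qm a q * A $$ (q,p) * Qm p b)" by (rule sum.swap)
      also have "\<dots> = C $$ (a,b)" using a b by (simp add: Cent sum_distrib_left mult.assoc)
      finally show "C $$ (a,b) = cnj (C $$ (b,a))" by simp
    qed
    have ev0: "c = 0" if "eigenvalue C c" for c
      using False that by blast
    have C0: "C $$ (a,b) = 0" if "a < n" "b < n" for a b
      by (rule herm_nilp_zero[OF C hC ev0 that])
    have "\<exists>b0<n. \<exists>a<n. Qm a b0 \<noteq> 0"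
    proof (rule ccontr)
      assume "\<not> ?thesis"
      then have Q0: "Qm a b = 0" if "a < n" "b < n" for a b using that by blast
      have "(\<Sum>a<n. Qm a a) = of_nat n - (\<Sum>a<n. \<Sum>i<k. cnj (v i a) * v i a)"
        unfolding Qm_def by (simp add: sum_subtractf mult.commute)
      also have "(\<Sum>a<n. \<Sum>i<k. cnj (v i a) * v i a) = (\<Sum>i<k. \<Sum>a<n. cnj (v i a) * v i a)" by (rule sum.swap)
      also have "\<dots> = (\<Sum>i<k. 1)" using oo by (intro sum.cong refl) auto
      finally have "(\<Sum>a<n. Qm a a) = of_nat n - of_nat k" by simp
      moreover have "(\<Sum>a<n. Qm a a) = 0" using Q0 by simp
      ultimately have "(of_nat n :: complex) = of_nat k" by simp
      then show False using kn by simp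
    qed
    then obtain b0 where b0: "b0 < n" "\<exists>a<n. Qm a b0 \<noteq> 0" by blast
    define x where "x a = Qm a b0" for a
    have orth: "\<forall>j<k. (\<Sum>a<n. cnj (v j a) * x a) = 0" unfolding x_def using L1 b0 by simp
    have "\<forall>a<n. (\<Sum>p<n. Qm a p * (\<Sum>q<n. A $$ (p,q) * x q)) = 0 * x a"
    proof (intro allI impI)
      fix a assume a: "a < n"
      have "(\<Sum>p<n. Qm a p * (\<Sum>q<n. A $$ (p,q) * x q)) = C $$ (a,b0)"
        unfolding x_def by (rule Cent[OF a b0(1), symmetric])
      then show "(\<Sum>p<n. Qm a p * (\<Sum>q<n. A $$ (p,q) * x q)) = 0 * x a"
        using C0[OF a b0(1)] by simp
    qed
    from key[OF orth this] have "\<forall>a<n. (\<Sum>b<n. A $$ (a,b) * x b) = 0 * x a" .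
    moreover have "\<exists>a<n. x a \<noteq> 0" using b0(2) unfolding x_def .
    ultimately show ?thesis using orth by blast
  qed
qed


lemma cnj_sq: "cnj z * z = complex_of_real ((cmod z)\<^sup>2)"
  by (metis complex_norm_square mult.commute)

lemma spectral_step:
  assumes A: "A \<in> carrier_mat n n" and h: "herm n A"
    and o: "onb n k v" and e: "eigs n k A v l" and kn: "k < n"
  shows "\<exists>v' l'. onb n (Suc k) v' \<and> eigs n (Suc k) A v' l'"
proof -
  obtain x c where nz: "\<exists>a<n. x a \<noteq> 0" and orth: "\<forall>j<k. (\<Sum>a<n. cnj (v j a) * x a) = 0"
    and ev: "\<forall>a<n. (\<Sum>b<n. A $$ (a,b) * x b) = c * x a"
    using find_orth_eig[OF A h o e kn] by blast
  have ic: "Im c = 0" by (rule herm_eig_real[OF h ev nz])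
  then have cre: "c = of_real (Re c)" by (simp add: complex_eq_iff)
  define r where "r = (\<Sum>a<n. (cmod (x a))\<^sup>2)"
  have rpos: "r > 0"
  proof -
    obtain a where a: "a < n" "x a \<noteq> 0" using nz by blast
    have "(cmod (x a))\<^sup>2 > 0" using a by simp
    moreover have "(cmod (x a))\<^sup>2 \<le> r" unfolding r_def
      using a by (intro member_le_sum) auto
    ultimately show ?thesis by linarith
  qed
  define s where "s = sqrt r"
  have spos: "s > 0" unfolding s_def using rpos by simp
  have ss: "s * s = r" unfolding s_def using rpos by simp
  define x' where "x' a = x a / of_real s" for a
  define v' where "v' = v(k := x')"
  define l' where "l' = l(k := Re c)"
  have o1: "(\<Sum>a<n. cnj (v j a) * x' a) = 0" if "j < k" for j
  proof -
    have "(\<Sum>a<n. cnj (v j a) * x' a) = (\<Sum>a<n. cnj (v j a) * x a) / of_real s"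
      unfolding x'_def by (simp add: sum_divide_distrib)
    then show ?thesis using orth that by simp
  qed
  have o2: "(\<Sum>a<n. cnj (x' a) * v j a) = 0" if "j < k" for j
  proof -
    have "(\<Sum>a<n. cnj (x' a) * v j a) = cnj (\<Sum>a<n. cnj (v j a) * x' a)" by (simp add: mult.commute)
    then show ?thesis using o1[OF that] by simp
  qed
  have o3: "(\<Sum>a<n. cnj (x' a) * x' a) = 1"
  proof -
    have "(\<Sum>a<n. cnj (x' a) * x' a) = (\<Sum>a<n. of_real ((cmod (x a))\<^sup>2) / of_real (s * s))"
    proof (intro sum.cong refl)
      fix a assume "a \<in> {..<n}"
      have "cnj (x' a) * x' a = (cnj (x a) * x a) / of_real (s * s)" unfolding x'_def by simp
      then show "cnj (x' a) * x' a = of_real ((cmod (x a))\<^sup>2) / of_real (s * s)" by (simp only: cnj_sq)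
    qed
    also have "\<dots> = (\<Sum>a<n. complex_of_real ((cmod (x a))\<^sup>2)) / of_real r" unfolding ss
      by (simp only: sum_divide_distrib)
    also have "\<dots> = of_real r / of_real r" unfolding r_def of_real_sum ..
    also have "\<dots> = 1" using rpos by simp
    finally show ?thesis .
  qed
  have "onb n (Suc k) v'"
    unfolding onb_def
  proof (intro allI impI)
    fix i j assume i: "i < Suc k" and j: "j < Suc k"
    show "(\<Sum>x<n. cnj (v' i x) * v' j x) = (if i = j then 1 else 0)"
    proof (cases "i = k")
      case True
      show ?thesis
      proof (cases "j = k")
        case True
        then show ?thesis using \<open>i = k\<close> o3 unfolding v'_def by simp
      next
        case False
        then have "j < k" using j by simp
        then show ?thesis using \<open>i = k\<close> o2 False unfolding v'_def by simp
      qed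
    next
      case False
      then have ik: "i < k" using i by simp
      show ?thesis
      proof (cases "j = k")
        case True
        then show ?thesis using ik o1 unfolding v'_def by simp
      next
        case False
        then have "j < k" using j by simp
        then show ?thesis using ik o \<open>j \<noteq> k\<close> \<open>i \<noteq> k\<close> unfolding v'_def onb_def by simp
      qed
    qed
  qed
  moreover have "eigs n (Suc k) A v' l'"
    unfolding eigs_def
  proof (intro allI impI)
    fix i a assume i: "i < Suc k" and a: "a < n"
    show "(\<Sum>y<n. A $$ (a,y) * v' i y) = of_real (l' i) * v' i a"
    proof (cases "i = k")
      case True
      have "(\<Sum>y<n. A $$ (a,y) * x' y) = (\<Sum>y<n. A $$ (a,y) * x y) / of_real s"
        unfolding x'_def by (simp add: sum_divide_distrib)
      also have "\<dots> = c * x a / of_real s" using ev a by simp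
      also have "\<dots> = of_real (Re c) * x' a" unfolding x'_def using cre by simp
      finally show ?thesis using True unfolding v'_def l'_def by simp
    next
      case False
      then have "i < k" using i by simp
      then show ?thesis using e a False unfolding v'_def l'_def eigs_def by simp
    qed
  qed
  ultimately show ?thesis by blast
qed

lemma spectral:
  assumes A: "A \<in> carrier_mat n n" and h: "herm n A"
  shows "\<exists>v l. onb n n v \<and> eigs n n A v l"
proof -
  have "\<exists>v l. onb n k v \<and> eigs n k A v l" if "k \<le> n" for k
    using that
  proof (induction k)
    case 0
    show ?case unfolding onb_def eigs_def by simp
  next
    case (Suc k)
    then obtain v l where "onb n k v" "eigs n k A v l" by auto
    then show ?case using spectral_step[OF A h] Suc.prems by simp
  qed
  then show ?thesis by simp
qed

lemma hermitian_herm: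
  assumes "A \<in> carrier_mat n n" "hermitian A"
  shows "herm n A"
  unfolding herm_def
proof (intro allI impI)
  fix i j assume ij: "i < n" "j < n"
  have "mat_adjoint A $$ (i,j) = A $$ (i,j)" using assms(2) unfolding hermitian_def by simp
  moreover have "mat_adjoint A $$ (i,j) = cnj (A $$ (j,i))"
    using assms(1) ij unfolding mat_adjoint_def by (simp add: mat_of_rows_def cols_def)
  ultimately show "A $$ (i,j) = cnj (A $$ (j,i))" by simp
qed

lemma herm_hermitian:
  assumes "A \<in> carrier_mat n n" "herm n A"
  shows "hermitian A"
  unfolding hermitian_def
proof (rule eq_matI)
  fix i j assume "i < dim_row A" "j < dim_col A"
  then have ij: "i < n" "j < n" using assms(1) by auto
  have "mat_adjoint A $$ (i,j) = cnj (A $$ (j,i))"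
    using assms(1) ij unfolding mat_adjoint_def by (simp add: mat_of_rows_def cols_def)
  also have "\<dots> = A $$ (i,j)" using hermD[OF assms(2) ij] by simp
  finally show "mat_adjoint A $$ (i,j) = A $$ (i,j)" .
qed (use assms(1) in \<open>auto simp: mat_adjoint_def\<close>)

lemma psd_form:
  assumes "A \<in> carrier_mat n n" "v \<in> carrier_vec n"
  shows "conjugate v \<bullet> (A *\<^sub>v v) = (\<Sum>a<n. cnj (v $ a) * (\<Sum>b<n. A $$ (a,b) * v $ b))"
  using assms by (auto simp: scalar_prod_def atLeast0LessThan multv_entry intro!: sum.cong)

lemma psd_intro:
  assumes A: "A \<in> carrier_mat n n"
    and f: "\<And>x. 0 \<le> Re (\<Sum>a<n. cnj (x a) * (\<Sum>b<n. A $$ (a,b) * x b))"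
  shows "psd A"
  unfolding psd_def
proof (intro ballI)
  fix v :: "complex vec" assume "v \<in> carrier_vec (dim_row A)"
  then have v: "v \<in> carrier_vec n" using A by auto
  show "0 \<le> Re (conjugate v \<bullet> (A *\<^sub>v v))" unfolding psd_form[OF A v] using f[of "\<lambda>a. v $ a"] .
qed

lemma psdD:
  assumes A: "A \<in> carrier_mat n n" and p: "psd A"
  shows "0 \<le> Re (\<Sum>a<n. cnj (x a) * (\<Sum>b<n. A $$ (a,b) * x b))"
proof -
  have v: "vec n x \<in> carrier_vec n" by simp
  have "0 \<le> Re (conjugate (vec n x) \<bullet> (A *\<^sub>v vec n x))" using p A v unfolding psd_def by auto
  then show ?thesis unfolding psd_form[OF A v] by simp
qed

lemma density_spectral:
  assumes d: "density_op n A"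
  shows "\<exists>v l. onb n n v \<and> eigs n n A v l \<and> (\<forall>i<n. 0 \<le> l i) \<and> (\<Sum>i<n. l i) = 1
     \<and> vN_entropy A = - (\<Sum>i<n. l i * ln (l i))"
proof -
  have A: "A \<in> carrier_mat n n" and hA: "hermitian A" and p: "psd A" and tr: "mtrace A = 1"
    using d unfolding density_op_def by auto
  have h: "herm n A" by (rule hermitian_herm[OF A hA])
  obtain v l where o: "onb n n v" and e: "eigs n n A v l" using spectral[OF A h] by blast
  have nn: "0 \<le> l i" if i: "i < n" for i
  proof -
    have "(\<Sum>a<n. cnj (v i a) * (\<Sum>b<n. A $$ (a,b) * v i b)) = (\<Sum>a<n. of_real (l i) * (cnj (v i a) * v i a))"
      using e i unfolding eigs_def by (intro sum.cong refl) (simp add: mult_ac)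
    also have "\<dots> = of_real (l i)" using o i unfolding onb_def by (simp add: sum_distrib_left[symmetric])
    finally show ?thesis using psdD[OF A p, of "v i"] by simp
  qed
  have "(\<Sum>i<n. complex_of_real (l i)) = (\<Sum>x<n. \<Sum>i<n. of_real (l i) * v i x * cnj (v i x))"
  proof -
    have "(\<Sum>x<n. \<Sum>i<n. of_real (l i) * v i x * cnj (v i x)) = (\<Sum>i<n. of_real (l i) * (\<Sum>x<n. cnj (v i x) * v i x))"
      by (subst sum.swap) (simp add: sum_distrib_left mult_ac)
    also have "\<dots> = (\<Sum>i<n. complex_of_real (l i))" using o unfolding onb_def by simp
    finally show ?thesis by simp
  qed
  also have "\<dots> = (\<Sum>x<n. A $$ (x,x))" using eig_decomp[OF A o e] by simp
  also have "\<dots> = 1" using tr A unfolding mtrace_def by simp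
  finally have "(\<Sum>i<n. l i) = 1" by (metis of_real_eq_1_iff of_real_sum)
  then show ?thesis using o e nn entropy_onb[OF A o e] by blast
qed


lemma idx2_lt:
  assumes "i < (M::nat)" "j < K"
  shows "i * K + j < M * K"
proof -
  have "i * K + j < i * K + K" using assms by simp
  also have "\<dots> = (i+1) * K" by simp
  also have "\<dots> \<le> M * K" using assms by (intro mult_right_mono) auto
  finally show ?thesis .
qed

lemma sum_split2:
  fixes f :: "nat \<Rightarrow> 'a::comm_monoid_add"
  shows "(\<Sum>t<M*K. f t) = (\<Sum>i<M. \<Sum>j<K. f (i*K + j))"
proof -
  have "(\<Sum>i<M. \<Sum>j<K. f (i*K + j)) = (\<Sum>p\<in>{..<M} \<times> {..<K}. f (fst p * K + snd p))"
    by (simp add: sum.cartesian_product split_def)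
  also have "\<dots> = (\<Sum>t<M*K. f t)"
  proof (rule sum.reindex_bij_witness[where i="\<lambda>t. (t div K, t mod K)" and j="\<lambda>p. fst p * K + snd p"])
    fix p assume "p \<in> {..<M} \<times> {..<K}"
    then obtain i j where p: "p = (i,j)" "i < M" "j < K" by auto
    show "((fst p * K + snd p) div K, (fst p * K + snd p) mod K) = p"
      using p by simp
    show "fst p * K + snd p \<in> {..<M*K}" using p idx2_lt by simp
  next
    fix t assume t: "t \<in> {..<M*K}"
    show "fst (t div K, t mod K) * K + snd (t div K, t mod K) = t" by simp
    have K: "K > 0" using t by (cases K) auto
    have "t div K < M" using t by (simp add: less_mult_imp_div_less)
    then show "(t div K, t mod K) \<in> {..<M} \<times> {..<K}" using K by simp
  qed simp
  finally show ?thesis by simp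
qed

lemma idx3_lt:
  assumes "x < E" "a < D" "z < (F::nat)"
  shows "x * (D*F) + a * F + z < E * D * F"
proof -
  have "a * F + z < D * F" using idx2_lt assms by blast
  then have "x * (D*F) + (a * F + z) < E * (D * F)" using idx2_lt assms by blast
  then show ?thesis by (simp add: add.assoc mult.assoc)
qed

lemma sum_split3:
  fixes f :: "nat \<Rightarrow> 'a::comm_monoid_add"
  shows "(\<Sum>t<E*D*F. f t) = (\<Sum>x<E. \<Sum>a<D. \<Sum>z<F. f (x*(D*F) + a*F + z))"
proof -
  have "(\<Sum>t<E*D*F. f t) = (\<Sum>t<E*(D*F). f t)" by (simp add: mult.assoc)
  also have "\<dots> = (\<Sum>x<E. \<Sum>s<D*F. f (x*(D*F) + s))" by (rule sum_split2)
  also have "\<dots> = (\<Sum>x<E. \<Sum>a<D. \<Sum>z<F. f (x*(D*F) + (a*F + z)))"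
    by (rule sum.cong[OF refl], rule sum_split2)
  finally show ?thesis by (simp add: add.assoc)
qed

lemma idx3_div:
  assumes "a < D" "z < (F::nat)"
  shows "(x * (D*F) + a * F + z) div (D*F) = x"
    and "(x * (D*F) + a * F + z) mod (D*F) div F = a"
    and "(x * (D*F) + a * F + z) mod F = z"
proof -
  have az: "a * F + z < D * F" using idx2_lt assms by blast
  have m: "D * F \<noteq> 0" using assms by auto
  have e: "x * (D*F) + a * F + z = (a * F + z) + x * (D*F)" by simp
  show "(x * (D*F) + a * F + z) div (D*F) = x" unfolding e using az m by simp
  have "(x * (D*F) + a * F + z) mod (D*F) = a * F + z" unfolding e using az m by simp
  then show "(x * (D*F) + a * F + z) mod (D*F) div F = a" using assms by simp
  have "x * (D*F) + a * F + z = (x * D + a) * F + z" by (simp add: algebra_simps)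
  then show "(x * (D*F) + a * F + z) mod F = z" using assms by simp
qed


definition blk :: "nat \<Rightarrow> nat \<Rightarrow> nat \<Rightarrow> complex mat \<Rightarrow> complex mat" where
  "blk E D F U = mat D D (\<lambda>(a,b). \<Sum>x<E. \<Sum>z<F. U $$ (x*(D*F) + a*F + z, x*(D*F) + b*F + z))"

lemma blk_carrier[simp]: "blk E D F U \<in> carrier_mat D D"
  unfolding blk_def by simp

lemma blk_dim[simp]: "dim_row (blk E D F U) = D" "dim_col (blk E D F U) = D"
  unfolding blk_def by simp_all

lemma blk_entry:
  "a < D \<Longrightarrow> b < D \<Longrightarrow> blk E D F U $$ (a,b) = (\<Sum>x<E. \<Sum>z<F. U $$ (x*(D*F) + a*F + z, x*(D*F) + b*F + z))"
  unfolding blk_def by simp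

lemma emb_sum:
  fixes g y :: "nat \<Rightarrow> complex"
  assumes x: "x < E" and z: "z < F"
  shows "(\<Sum>t<E*D*F. g t * (if t div (D*F) = x \<and> t mod F = z then y (t mod (D*F) div F) else 0))
       = (\<Sum>b<D. g (x*(D*F) + b*F + z) * y b)"
proof -
  let ?w = "\<lambda>t. if t div (D*F) = x \<and> t mod F = z then y (t mod (D*F) div F) else 0"
  have "(\<Sum>t<E*D*F. g t * ?w t) = (\<Sum>x'<E. \<Sum>b<D. \<Sum>z'<F. g (x'*(D*F) + b*F + z') * ?w (x'*(D*F) + b*F + z'))"
    by (rule sum_split3)
  also have "\<dots> = (\<Sum>x'<E. \<Sum>b<D. \<Sum>z'<F. if x' = x then (if z' = z then g (x*(D*F) + b*F + z) * y b else 0) else 0)"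
  proof (intro sum.cong refl)
    fix x' b z' assume "x' \<in> {..<E}" "b \<in> {..<D}" "z' \<in> {..<F}"
    then have b: "b < D" and z': "z' < F" by auto
    show "g (x'*(D*F) + b*F + z') * ?w (x'*(D*F) + b*F + z') = (if x' = x then (if z' = z then g (x*(D*F) + b*F + z) * y b else 0) else 0)"
      using idx3_div[OF b z', of x'] by auto
  qed
  also have "\<dots> = (\<Sum>x'<E. if x' = x then (\<Sum>b<D. g (x*(D*F) + b*F + z) * y b) else 0)"
    using z by (intro sum.cong refl) (simp add: sum.delta')
  also have "\<dots> = (\<Sum>b<D. g (x*(D*F) + b*F + z) * y b)" using x by (simp add: sum.delta')
  finally show ?thesis .
qed

lemma blk_density:
  assumes d: "density_op (E*D*F) U"
  shows "density_op D (blk E D F U)"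
proof -
  let ?N = "E*D*F"
  have U: "U \<in> carrier_mat ?N ?N" and hU: "herm ?N U" and pU: "psd U" and tU: "mtrace U = 1"
    using d hermitian_herm[of U ?N] unfolding density_op_def by auto
  have hB: "herm D (blk E D F U)" unfolding herm_def
  proof (intro allI impI)
    fix a b assume a: "a < D" and b: "b < D"
    have "cnj (blk E D F U $$ (b,a)) = (\<Sum>x<E. \<Sum>z<F. cnj (U $$ (x*(D*F) + b*F + z, x*(D*F) + a*F + z)))"
      using a b by (simp add: blk_entry)
    also have "\<dots> = (\<Sum>x<E. \<Sum>z<F. U $$ (x*(D*F) + a*F + z, x*(D*F) + b*F + z))"
    proof (intro sum.cong refl)
      fix x z assume "x \<in> {..<E}" "z \<in> {..<F}"
      then have i1: "x*(D*F) + a*F + z < ?N" and i2: "x*(D*F) + b*F + z < ?N" using idx3_lt a b by auto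
      show "cnj (U $$ (x*(D*F) + b*F + z, x*(D*F) + a*F + z)) = U $$ (x*(D*F) + a*F + z, x*(D*F) + b*F + z)"
        using hermD[OF hU i1 i2] by simp
    qed
    also have "\<dots> = blk E D F U $$ (a,b)" using a b by (simp add: blk_entry)
    finally show "blk E D F U $$ (a,b) = cnj (blk E D F U $$ (b,a))" by simp
  qed
  have pB: "psd (blk E D F U)"
  proof (rule psd_intro[OF blk_carrier])
    fix y :: "nat \<Rightarrow> complex"
    define Q where "Q x z = (\<Sum>a<D. cnj (y a) * (\<Sum>b<D. U $$ (x*(D*F) + a*F + z, x*(D*F) + b*F + z) * y b))" for x z
    have Qnn: "0 \<le> Re (Q x z)" if x: "x < E" and z: "z < F" for x z
    proof -
      define w where "w t = (if t div (D*F) = x \<and> t mod F = z then y (t mod (D*F) div F) else 0)" for t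
      define wc where "wc t = (if t div (D*F) = x \<and> t mod F = z then cnj (y (t mod (D*F) div F)) else 0)" for t
      have inner: "(\<Sum>s<?N. U $$ (t,s) * w s) = (\<Sum>b<D. U $$ (t, x*(D*F) + b*F + z) * y b)" for t
        unfolding w_def by (rule emb_sum[OF x z])
      have "(\<Sum>t<?N. cnj (w t) * (\<Sum>s<?N. U $$ (t,s) * w s)) = (\<Sum>t<?N. (\<Sum>b<D. U $$ (t, x*(D*F) + b*F + z) * y b) * wc t)"
        unfolding inner by (intro sum.cong refl) (simp add: w_def wc_def)
      also have "\<dots> = (\<Sum>a<D. (\<Sum>b<D. U $$ (x*(D*F) + a*F + z, x*(D*F) + b*F + z) * y b) * cnj (y a))"
        unfolding wc_def by (rule emb_sum[OF x z])
      also have "\<dots> = Q x z" unfolding Q_def by (simp add: mult.commute)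
      finally show ?thesis using psdD[OF U pU, of w] by simp
    qed
    have "(\<Sum>a<D. cnj (y a) * (\<Sum>b<D. blk E D F U $$ (a,b) * y b)) = (\<Sum>x<E. \<Sum>z<F. Q x z)"
    proof -
      have "(\<Sum>a<D. cnj (y a) * (\<Sum>b<D. blk E D F U $$ (a,b) * y b))
          = (\<Sum>a<D. \<Sum>b<D. \<Sum>x<E. \<Sum>z<F. cnj (y a) * (U $$ (x*(D*F) + a*F + z, x*(D*F) + b*F + z) * y b))"
        by (intro sum.cong refl) (simp add: blk_entry sum_distrib_left sum_distrib_right)
      also have "\<dots> = (\<Sum>a<D. \<Sum>x<E. \<Sum>z<F. \<Sum>b<D. cnj (y a) * (U $$ (x*(D*F) + a*F + z, x*(D*F) + b*F + z) * y b))"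
        by (rule sum.cong[OF refl], subst sum.swap, rule sum.cong[OF refl], rule sum.swap)
      also have "\<dots> = (\<Sum>x<E. \<Sum>a<D. \<Sum>z<F. \<Sum>b<D. cnj (y a) * (U $$ (x*(D*F) + a*F + z, x*(D*F) + b*F + z) * y b))"
        by (rule sum.swap)
      also have "\<dots> = (\<Sum>x<E. \<Sum>z<F. \<Sum>a<D. \<Sum>b<D. cnj (y a) * (U $$ (x*(D*F) + a*F + z, x*(D*F) + b*F + z) * y b))"
        by (rule sum.cong[OF refl], rule sum.swap)
      also have "\<dots> = (\<Sum>x<E. \<Sum>z<F. Q x z)" unfolding Q_def by (simp add: sum_distrib_left)
      finally show ?thesis .
    qed
    then have "Re (\<Sum>a<D. cnj (y a) * (\<Sum>b<D. blk E D F U $$ (a,b) * y b)) = (\<Sum>x<E. \<Sum>z<F. Re (Q x z))"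
      by simp
    also have "\<dots> \<ge> 0" using Qnn by (intro sum_nonneg) auto
    finally show "0 \<le> Re (\<Sum>a<D. cnj (y a) * (\<Sum>b<D. blk E D F U $$ (a,b) * y b))" .
  qed
  have tB: "mtrace (blk E D F U) = 1"
  proof -
    have "mtrace (blk E D F U) = (\<Sum>a<D. \<Sum>x<E. \<Sum>z<F. U $$ (x*(D*F) + a*F + z, x*(D*F) + a*F + z))"
      unfolding mtrace_def by (simp add: blk_entry)
    also have "\<dots> = (\<Sum>x<E. \<Sum>a<D. \<Sum>z<F. U $$ (x*(D*F) + a*F + z, x*(D*F) + a*F + z))"
      by (rule sum.swap)
    also have "\<dots> = (\<Sum>t<?N. U $$ (t,t))" by (rule sum_split3[symmetric])
    also have "\<dots> = 1" using tU U unfolding mtrace_def by simp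
    finally show ?thesis .
  qed
  show ?thesis unfolding density_op_def using hB pB tB herm_hermitian[OF blk_carrier hB] by simp
qed


lemma sum_lessThan_add:
  fixes f :: "nat \<Rightarrow> 'a::comm_monoid_add"
  shows "(\<Sum>i<m+n. f i) = (\<Sum>i<m. f i) + (\<Sum>i<n. f (m+i))"
  by (induction n) (simp_all add: add.assoc)

lemma enc_add:
  "enc d (m1 + m2) f = enc d m1 f * d ^ m2 + enc d m2 (\<lambda>k. f (m1 + k))"
proof -
  have "enc d (m1 + m2) f = (\<Sum>p<m1. f p * d ^ (m1 + m2 - 1 - p)) + (\<Sum>k<m2. f (m1 + k) * d ^ (m1 + m2 - 1 - (m1 + k)))"
    unfolding enc_def by (rule sum_lessThan_add)
  also have "(\<Sum>p<m1. f p * d ^ (m1 + m2 - 1 - p)) = (\<Sum>p<m1. f p * d ^ (m1 - 1 - p)) * d ^ m2"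
    unfolding sum_distrib_right
  proof (intro sum.cong refl)
    fix p assume "p \<in> {..<m1}"
    then have "m1 + m2 - 1 - p = (m1 - 1 - p) + m2" by auto
    then show "f p * d ^ (m1 + m2 - 1 - p) = f p * d ^ (m1 - 1 - p) * d ^ m2" by (simp add: power_add)
  qed
  also have "(\<Sum>k<m2. f (m1 + k) * d ^ (m1 + m2 - 1 - (m1 + k))) = enc d m2 (\<lambda>k. f (m1 + k))"
    unfolding enc_def by (intro sum.cong refl) auto
  finally show ?thesis unfolding enc_def by simp
qed

lemma enc_Suc: "enc d (Suc m) f = enc d m f * d + f m"
  using enc_add[of d m 1 f] by (simp add: enc_def)

lemma enc_cong: "(\<And>p. p < m \<Longrightarrow> f p = g p) \<Longrightarrow> enc d m f = enc d m g"
  unfolding enc_def by (intro sum.cong refl) auto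

lemma enc_digit:
  assumes "x < d ^ m" "d > 0"
  shows "enc d m (\<lambda>p. digit d m p x) = x"
  using assms(1)
proof (induction m arbitrary: x)
  case 0
  then show ?case by (simp add: enc_def)
next
  case (Suc m)
  have "enc d (Suc m) (\<lambda>p. digit d (Suc m) p x) = enc d m (\<lambda>p. digit d (Suc m) p x) * d + digit d (Suc m) m x"
    by (rule enc_Suc)
  also have "enc d m (\<lambda>p. digit d (Suc m) p x) = enc d m (\<lambda>p. digit d m p (x div d))"
  proof (rule enc_cong)
    fix p assume p: "p < m"
    have "Suc m - 1 - p = Suc (m - 1 - p)" using p by auto
    then show "digit d (Suc m) p x = digit d m p (x div d)"
      unfolding digit_def by (simp add: div_mult2_eq)
  qed
  also have "\<dots> = x div d"
  proof (rule Suc.IH)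
    show "x div d < d ^ m" using Suc.prems assms(2) by (simp add: div_less_iff_less_mult mult.commute)
  qed
  also have "digit d (Suc m) m x = x mod d" unfolding digit_def by simp
  finally show ?case by simp
qed

lemma digit_hi:
  assumes "k < p"
  shows "digit d (p + r) k c = digit d p k (c div d ^ r)"
proof -
  have "p + r - 1 - k = r + (p - 1 - k)" using assms by auto
  then show ?thesis unfolding digit_def by (simp add: div_mult2_eq power_add)
qed

lemma mod_mult_div: "(c::nat) mod (b * q) div b = c div b mod q"
proof (cases "b = 0")
  case True then show ?thesis by simp
next
  case False
  have "c mod (b * q) = b * (c div b mod q) + c mod b" by (rule mod_mult2_eq)
  then show ?thesis using False by simp
qed

lemma digit_lo:
  assumes "t < r"
  shows "digit d (p + r) (p + t) c = digit d r t (c mod d ^ r)"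
proof -
  define s where "s = r - 1 - t"
  have e1: "p + r - 1 - (p + t) = s" unfolding s_def using assms by auto
  have e2: "r = s + Suc t" unfolding s_def using assms by auto
  have "(c mod d ^ r) div d ^ s = c div d ^ s mod d ^ Suc t"
    unfolding e2 power_add by (rule mod_mult_div)
  then have "(c mod d ^ r) div d ^ s mod d = c div d ^ s mod d"
    by (simp add: mod_mod_cancel)
  then show ?thesis unfolding digit_def e1 s_def[symmetric] by simp
qed


lemma enc_assign_block:
  assumes d: "d > 0" and N: "N = p + q + r" and a: "a < d ^ q" and c: "c < d ^ (p + r)"
  shows "enc d N (assign d N {p..<p+q} a c) = (c div d ^ r) * (d ^ q * d ^ r) + a * d ^ r + c mod d ^ r"
proof -
  let ?S = "{p..<p+q}"
  let ?C = "{0..<N} - ?S"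
  define g where "g = assign d N ?S a c"
  have cardS: "card ?S = q" by simp
  have cardC: "card ?C = p + r"
  proof -
    have "?S \<subseteq> {0..<N}" using N by auto
    then have "card ?C = card {0..<N} - card ?S" by (simp add: card_Diff_subset)
    then show ?thesis using N by simp
  qed
  have g1: "g k = digit d (p + r) k c" if k: "k < p" for k
  proof -
    have "{s \<in> ?C. s < k} = {0..<k}" using k N by auto
    then show ?thesis using k unfolding g_def assign_def Let_def cardC by simp
  qed
  have g2: "g (p + t) = digit d q t a" if t: "t < q" for t
  proof -
    have "{s \<in> ?S. s < p + t} = {p..<p+t}" using t by auto
    then show ?thesis using t unfolding g_def assign_def Let_def by simp
  qed
  have g3: "g (p + q + t) = digit d (p + r) (p + t) c" if t: "t < r" for t
  proof -
    have "{s \<in> ?C. s < p + q + t} = {0..<p} \<union> {p+q..<p+q+t}" using t N by auto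
    moreover have "card ({0..<p} \<union> {p+q..<p+q+t}) = p + t"
      by (subst card_Un_disjoint) auto
    ultimately have "card {s \<in> ?C. s < p + q + t} = p + t" by simp
    then show ?thesis using t N unfolding g_def assign_def Let_def cardC by simp
  qed
  have "enc d N g = enc d p g * d ^ (q + r) + (enc d q (\<lambda>k. g (p + k)) * d ^ r + enc d r (\<lambda>k. g (p + q + k)))"
    unfolding N using enc_add[of d p "q + r" g] enc_add[of d q r "\<lambda>k. g (p + k)"]
    by (simp add: add.assoc)
  also have "enc d p g = c div d ^ r"
  proof -
    have "enc d p g = enc d p (\<lambda>k. digit d p k (c div d ^ r))"
      by (rule enc_cong) (simp add: g1 digit_hi)
    also have "\<dots> = c div d ^ r"
    proof (rule enc_digit[OF _ d])
      show "c div d ^ r < d ^ p" using c d by (simp add: div_less_iff_less_mult power_add mult.commute)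
    qed
    finally show ?thesis .
  qed
  also have "enc d q (\<lambda>k. g (p + k)) = a"
  proof -
    have "enc d q (\<lambda>k. g (p + k)) = enc d q (\<lambda>k. digit d q k a)"
      by (rule enc_cong) (simp add: g2)
    also have "\<dots> = a" by (rule enc_digit[OF a d])
    finally show ?thesis .
  qed
  also have "enc d r (\<lambda>k. g (p + q + k)) = c mod d ^ r"
  proof -
    have "enc d r (\<lambda>k. g (p + q + k)) = enc d r (\<lambda>k. digit d r k (c mod d ^ r))"
      by (rule enc_cong) (simp add: g3 digit_lo)
    also have "\<dots> = c mod d ^ r" by (rule enc_digit[OF _ d]) (use d in simp)
    finally show ?thesis .
  qed
  finally show ?thesis unfolding g_def by (simp add: power_add)
qed

lemma marg_blk:
  assumes d: "d > 0" and pq: "p + q \<le> N"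
  shows "marg d N {p..<p+q} U = blk (d ^ p) (d ^ q) (d ^ (N - p - q)) U"
proof -
  define r where "r = N - p - q"
  have N: "N = p + q + r" unfolding r_def using pq by simp
  have Nq: "N - q = p + r" using N by simp
  show ?thesis
  proof (rule eq_matI)
    fix a b assume "a < dim_row (blk (d ^ p) (d ^ q) (d ^ (N - p - q)) U)" "b < dim_col (blk (d ^ p) (d ^ q) (d ^ (N - p - q)) U)"
    then have a: "a < d ^ q" and b: "b < d ^ q" by auto
    have "marg d N {p..<p+q} U $$ (a,b) = (\<Sum>c<d ^ (p + r). U $$ (enc d N (assign d N {p..<p+q} a c), enc d N (assign d N {p..<p+q} b c)))"
      unfolding marg_def Let_def using a b Nq by simp
    also have "\<dots> = (\<Sum>c<d ^ (p + r). U $$ ((c div d ^ r) * (d ^ q * d ^ r) + a * d ^ r + c mod d ^ r, (c div d ^ r) * (d ^ q * d ^ r) + b * d ^ r + c mod d ^ r))"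
      by (intro sum.cong refl) (simp add: enc_assign_block[OF d N a] enc_assign_block[OF d N b])
    also have "\<dots> = (\<Sum>x<d ^ p. \<Sum>z<d ^ r. U $$ (x * (d ^ q * d ^ r) + a * d ^ r + z, x * (d ^ q * d ^ r) + b * d ^ r + z))"
      unfolding power_add sum_split2 using d by simp
    also have "\<dots> = blk (d ^ p) (d ^ q) (d ^ (N - p - q)) U $$ (a,b)"
      using a b unfolding r_def by (simp add: blk_entry)
    finally show "marg d N {p..<p+q} U $$ (a,b) = blk (d ^ p) (d ^ q) (d ^ (N - p - q)) U $$ (a,b)" .
  qed (simp_all add: marg_def Let_def)
qed

lemma blk_comp:
  "blk a b c (blk e (a*b*c) f U) = blk (e*a) b (c*f) U"
proof (rule eq_matI)
  fix p q assume "p < dim_row (blk (e*a) b (c*f) U)" "q < dim_col (blk (e*a) b (c*f) U)"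
  then have p: "p < b" and q: "q < b" by auto
  have "blk a b c (blk e (a*b*c) f U) $$ (p,q)
     = (\<Sum>x<a. \<Sum>z<c. \<Sum>x'<e. \<Sum>z'<f. U $$ (x'*((a*b*c)*f) + (x*(b*c) + p*c + z)*f + z', x'*((a*b*c)*f) + (x*(b*c) + q*c + z)*f + z'))"
    using p q idx3_lt by (simp add: blk_entry)
  also have "\<dots> = (\<Sum>x'<e. \<Sum>x<a. \<Sum>z<c. \<Sum>z'<f. U $$ (x'*((a*b*c)*f) + (x*(b*c) + p*c + z)*f + z', x'*((a*b*c)*f) + (x*(b*c) + q*c + z)*f + z'))"
    by (subst sum.swap, subst sum.swap, rule refl)
  also have "\<dots> = (\<Sum>x'<e. \<Sum>x<a. \<Sum>z<c. \<Sum>z'<f. U $$ ((x'*a + x)*(b*(c*f)) + p*(c*f) + (z*f + z'), (x'*a + x)*(b*(c*f)) + q*(c*f) + (z*f + z')))"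
    by (intro sum.cong refl) (simp add: algebra_simps)
  also have "\<dots> = blk (e*a) b (c*f) U $$ (p,q)"
    using p q by (simp add: blk_entry sum_split2)
  finally show "blk a b c (blk e (a*b*c) f U) $$ (p,q) = blk (e*a) b (c*f) U $$ (p,q)" .
qed simp_all

lemma blk_id:
  assumes "U \<in> carrier_mat D D"
  shows "blk 1 D 1 U = U"
  using assms by (intro eq_matI) (auto simp: blk_entry)


definition ip :: "nat \<Rightarrow> (nat \<Rightarrow> complex) \<Rightarrow> (nat \<Rightarrow> complex) \<Rightarrow> complex" where
  "ip n u w = (\<Sum>x<n. cnj (u x) * w x)"

definition quad :: "nat \<Rightarrow> complex mat \<Rightarrow> (nat \<Rightarrow> complex) \<Rightarrow> complex" where
  "quad n M w = (\<Sum>x<n. cnj (w x) * (\<Sum>y<n. M $$ (x,y) * w y))"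

lemma ip_cnj: "cnj (ip n u w) = ip n w u"
  unfolding ip_def by (simp add: mult.commute)

lemma ip_self: "ip n w w = of_real (\<Sum>x<n. (cmod (w x))\<^sup>2)"
  unfolding ip_def of_real_sum by (intro sum.cong refl) (rule cnj_sq)

lemma onb_ip: "onb n k v \<Longrightarrow> i < k \<Longrightarrow> j < k \<Longrightarrow> ip n (v i) (v j) = (if i = j then 1 else 0)"
  unfolding onb_def ip_def by blast

lemma quad_eig:
  assumes o: "onb n n v" and e: "eigs n n M v l" and i: "i < n"
  shows "quad n M (v i) = of_real (l i)"
proof -
  have "quad n M (v i) = (\<Sum>x<n. of_real (l i) * (cnj (v i x) * v i x))"
    unfolding quad_def using e i unfolding eigs_def by (intro sum.cong refl) (simp add: mult_ac)
  also have "\<dots> = of_real (l i) * ip n (v i) (v i)" unfolding ip_def by (simp add: sum_distrib_left)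
  finally show ?thesis using onb_ip[OF o i i] by simp
qed

lemma quad_decomp:
  assumes M: "M \<in> carrier_mat n n" and o: "onb n n v" and e: "eigs n n M v l"
  shows "quad n M w = (\<Sum>i<n. of_real (l i) * of_real ((cmod (ip n (v i) w))\<^sup>2))"
proof -
  have "quad n M w = (\<Sum>x<n. \<Sum>y<n. \<Sum>i<n. of_real (l i) * (cnj (w x) * v i x) * (cnj (v i y) * w y))"
    unfolding quad_def
  proof (intro sum.cong refl)
    fix x assume x: "x \<in> {..<n}"
    show "cnj (w x) * (\<Sum>y<n. M $$ (x,y) * w y) = (\<Sum>y<n. \<Sum>i<n. of_real (l i) * (cnj (w x) * v i x) * (cnj (v i y) * w y))"
      unfolding sum_distrib_left
    proof (intro sum.cong refl)
      fix y assume y: "y \<in> {..<n}"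
      have "M $$ (x,y) = (\<Sum>i<n. of_real (l i) * v i x * cnj (v i y))" using eig_decomp[OF M o e] x y by simp
      then show "cnj (w x) * (M $$ (x,y) * w y) = (\<Sum>i<n. of_real (l i) * (cnj (w x) * v i x) * (cnj (v i y) * w y))"
        by (simp add: sum_distrib_left sum_distrib_right mult_ac)
    qed
  qed
  also have "\<dots> = (\<Sum>i<n. \<Sum>x<n. \<Sum>y<n. of_real (l i) * (cnj (w x) * v i x) * (cnj (v i y) * w y))"
    by (subst sum.swap, rule sum.cong[OF refl], subst sum.swap, rule refl)
  also have "\<dots> = (\<Sum>i<n. of_real (l i) * (cnj (ip n (v i) w) * ip n (v i) w))"
  proof (intro sum.cong refl)
    fix i
    have "cnj (ip n (v i) w) = (\<Sum>x<n. cnj (w x) * v i x)" unfolding ip_def by (simp add: mult.commute)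
    then show "(\<Sum>x<n. \<Sum>y<n. of_real (l i) * (cnj (w x) * v i x) * (cnj (v i y) * w y)) = of_real (l i) * (cnj (ip n (v i) w) * ip n (v i) w)"
      unfolding ip_def apply (simp add: sum_distrib_left sum_distrib_right mult.assoc)
      by (rule sum.swap)
  qed
  also have "\<dots> = (\<Sum>i<n. of_real (l i) * of_real ((cmod (ip n (v i) w))\<^sup>2))"
    by (simp only: cnj_sq)
  finally show ?thesis .
qed

lemma parseval_c:
  assumes o: "onb n n v"
  shows "(\<Sum>i<n. cnj (ip n (v i) w) * ip n (v i) w) = ip n w w"
proof -
  have "(\<Sum>i<n. cnj (ip n (v i) w) * ip n (v i) w) = (\<Sum>i<n. \<Sum>x<n. \<Sum>y<n. cnj (w x) * w y * (v i x * cnj (v i y)))"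
  proof (intro sum.cong refl)
    fix i
    have "cnj (ip n (v i) w) = (\<Sum>x<n. cnj (w x) * v i x)" unfolding ip_def by (simp add: mult.commute)
    then show "cnj (ip n (v i) w) * ip n (v i) w = (\<Sum>x<n. \<Sum>y<n. cnj (w x) * w y * (v i x * cnj (v i y)))"
      unfolding ip_def by (simp add: sum_distrib_left sum_distrib_right mult_ac)
  qed
  also have "\<dots> = (\<Sum>x<n. \<Sum>y<n. cnj (w x) * w y * (\<Sum>i<n. v i x * cnj (v i y)))"
    by (subst sum.swap, rule sum.cong[OF refl], subst sum.swap, simp add: sum_distrib_left)
  also have "\<dots> = (\<Sum>x<n. \<Sum>y<n. cnj (w x) * w y * (if x = y then 1 else 0))"
    using onb_complete[OF o] by (intro sum.cong refl) auto
  also have "\<dots> = ip n w w" unfolding ip_def by (simp add: if01_mult sum.delta sum.delta')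
  finally show ?thesis .
qed

lemma parseval:
  assumes o: "onb n n v"
  shows "(\<Sum>i<n. (cmod (ip n (v i) w))\<^sup>2) = (\<Sum>x<n. (cmod (w x))\<^sup>2)"
proof -
  have "of_real (\<Sum>i<n. (cmod (ip n (v i) w))\<^sup>2) = (\<Sum>i<n. cnj (ip n (v i) w) * ip n (v i) w)"
    unfolding of_real_sum by (intro sum.cong refl) (simp only: cnj_sq)
  also have "\<dots> = of_real (\<Sum>x<n. (cmod (w x))\<^sup>2)" using parseval_c[OF o] ip_self by simp
  finally show ?thesis by (simp only: of_real_eq_iff)
qed

definition tens :: "nat \<Rightarrow> (nat \<Rightarrow> complex) \<Rightarrow> (nat \<Rightarrow> complex) \<Rightarrow> nat \<Rightarrow> complex" where
  "tens D2 f g t = f (t div D2) * g (t mod D2)"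

lemma tens_idx: "y < D2 \<Longrightarrow> tens D2 f g (x * D2 + y) = f x * g y"
  unfolding tens_def by simp

lemma ip_tens: "ip (D1*D2) (tens D2 f g) (tens D2 f' g') = ip D1 f f' * ip D2 g g'"
proof -
  have "ip (D1*D2) (tens D2 f g) (tens D2 f' g') = (\<Sum>x<D1. \<Sum>y<D2. cnj (tens D2 f g (x*D2+y)) * tens D2 f' g' (x*D2+y))"
    unfolding ip_def by (rule sum_split2)
  also have "\<dots> = (\<Sum>x<D1. \<Sum>y<D2. (cnj (f x) * f' x) * (cnj (g y) * g' y))"
    by (intro sum.cong refl) (simp add: tens_idx mult_ac)
  also have "\<dots> = ip D1 f f' * ip D2 g g'" unfolding ip_def
    apply (simp add: sum_distrib_left sum_distrib_right) by (rule sum.swap)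
  finally show ?thesis .
qed


lemma sum_pull3:
  fixes F :: "nat \<Rightarrow> nat \<Rightarrow> nat \<Rightarrow> complex"
  shows "(\<Sum>b<B. \<Sum>t<T. \<Sum>s<S. F b t s) = (\<Sum>t<T. \<Sum>s<S. \<Sum>b<B. F b t s)"
  by (subst sum.swap, rule sum.cong[OF refl], rule sum.swap)

lemma quad_tens_B:
  assumes o: "onb D2 D2 g"
  shows "(\<Sum>b<D2. quad (D1*D2) \<rho> (tens D2 f (g b))) = quad D1 (blk 1 D1 D2 \<rho>) f"
proof -
  let ?N = "D1*D2"
  have "(\<Sum>b<D2. quad ?N \<rho> (tens D2 f (g b)))
      = (\<Sum>b<D2. \<Sum>t<?N. \<Sum>s<?N. \<rho> $$ (t,s) * (cnj (f (t div D2)) * f (s div D2)) * (cnj (g b (t mod D2)) * g b (s mod D2)))"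
    unfolding quad_def tens_def by (simp add: sum_distrib_left mult_ac)
  also have "\<dots> = (\<Sum>t<?N. \<Sum>s<?N. \<rho> $$ (t,s) * (cnj (f (t div D2)) * f (s div D2)) * (\<Sum>b<D2. cnj (g b (t mod D2)) * g b (s mod D2)))"
    by (subst sum_pull3) (simp add: sum_distrib_left)
  also have "\<dots> = (\<Sum>x<D1. \<Sum>y<D2. \<Sum>x'<D1. \<Sum>y'<D2. \<rho> $$ (x*D2+y, x'*D2+y') * (cnj (f x) * f x') * (if y' = y then 1 else 0))"
  proof -
    have c: "(\<Sum>b<D2. cnj (g b y) * g b y') = (if y' = y then 1 else 0)" if "y < D2" "y' < D2" for y y'
      using onb_complete[OF o that(2) that(1)] by (simp add: mult.commute)
    show ?thesis
      unfolding sum_split2[of _ D1 D2]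
      by (intro sum.cong refl) (simp add: c)
  qed
  also have "\<dots> = (\<Sum>x<D1. \<Sum>y<D2. \<Sum>x'<D1. \<rho> $$ (x*D2+y, x'*D2+y) * (cnj (f x) * f x'))"
    by (intro sum.cong refl) (simp add: if01_mult sum.delta)
  also have "\<dots> = (\<Sum>x<D1. \<Sum>x'<D1. \<Sum>y<D2. \<rho> $$ (x*D2+y, x'*D2+y) * (cnj (f x) * f x'))"
    by (rule sum.cong[OF refl], rule sum.swap)
  also have "\<dots> = quad D1 (blk 1 D1 D2 \<rho>) f"
    unfolding quad_def by (intro sum.cong refl) (simp add: blk_entry sum_distrib_left sum_distrib_right mult_ac)
  finally show ?thesis .
qed

lemma quad_tens_A:
  assumes o: "onb D1 D1 f"
  shows "(\<Sum>a<D1. quad (D1*D2) \<rho> (tens D2 (f a) g)) = quad D2 (blk D1 D2 1 \<rho>) g"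
proof -
  let ?N = "D1*D2"
  have "(\<Sum>a<D1. quad ?N \<rho> (tens D2 (f a) g))
      = (\<Sum>a<D1. \<Sum>t<?N. \<Sum>s<?N. \<rho> $$ (t,s) * (cnj (g (t mod D2)) * g (s mod D2)) * (cnj (f a (t div D2)) * f a (s div D2)))"
    unfolding quad_def tens_def by (simp add: sum_distrib_left mult_ac)
  also have "\<dots> = (\<Sum>t<?N. \<Sum>s<?N. \<rho> $$ (t,s) * (cnj (g (t mod D2)) * g (s mod D2)) * (\<Sum>a<D1. cnj (f a (t div D2)) * f a (s div D2)))"
    by (subst sum_pull3) (simp add: sum_distrib_left)
  also have "\<dots> = (\<Sum>x<D1. \<Sum>y<D2. \<Sum>x'<D1. \<Sum>y'<D2. \<rho> $$ (x*D2+y, x'*D2+y') * (cnj (g y) * g y') * (if x' = x then 1 else 0))"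
  proof -
    have c: "(\<Sum>a<D1. cnj (f a x) * f a x') = (if x' = x then 1 else 0)" if "x < D1" "x' < D1" for x x'
      using onb_complete[OF o that(2) that(1)] by (simp add: mult.commute)
    show ?thesis
      unfolding sum_split2[of _ D1 D2]
      by (intro sum.cong refl) (simp add: c)
  qed
  also have "\<dots> = (\<Sum>x<D1. \<Sum>y<D2. \<Sum>y'<D2. \<rho> $$ (x*D2+y, x*D2+y') * (cnj (g y) * g y'))"
  proof (rule sum.cong[OF refl], rule sum.cong[OF refl])
    fix x y assume "x \<in> {..<D1}" "y \<in> {..<D2}"
    show "(\<Sum>x'<D1. \<Sum>y'<D2. \<rho> $$ (x*D2+y, x'*D2+y') * (cnj (g y) * g y') * (if x' = x then 1 else 0))
        = (\<Sum>y'<D2. \<rho> $$ (x*D2+y, x*D2+y') * (cnj (g y) * g y'))"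
    proof -
      have "(\<Sum>y'<D2. \<rho> $$ (x*D2+y, x'*D2+y') * (cnj (g y) * g y') * (if x' = x then 1 else 0))
          = (if x' = x then (\<Sum>y'<D2. \<rho> $$ (x*D2+y, x'*D2+y') * (cnj (g y) * g y')) else 0)" for x'
        by simp
      then show ?thesis using \<open>x \<in> {..<D1}\<close> by (simp add: sum.delta')
    qed
  qed
  also have "\<dots> = (\<Sum>y<D2. \<Sum>y'<D2. \<Sum>x<D1. \<rho> $$ (x*D2+y, x*D2+y') * (cnj (g y) * g y'))"
    by (rule sum_pull3)
  also have "\<dots> = quad D2 (blk D1 D2 1 \<rho>) g"
    unfolding quad_def by (intro sum.cong refl) (simp add: blk_entry sum_distrib_left sum_distrib_right mult_ac)
  finally show ?thesis .
qed


lemma klein_abstract: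
  fixes p r :: "nat \<Rightarrow> real" and c :: "nat \<Rightarrow> nat \<Rightarrow> real"
  assumes p0: "\<And>i. i < n \<Longrightarrow> 0 \<le> p i" and p1: "(\<Sum>i<n. p i) = 1"
    and c0: "\<And>i j. i < n \<Longrightarrow> j < m \<Longrightarrow> 0 \<le> c i j"
    and crow: "\<And>i. i < n \<Longrightarrow> (\<Sum>j<m. c i j) = 1"
    and ccol: "\<And>j. j < m \<Longrightarrow> (\<Sum>i<n. c i j) \<le> 1"
    and r0: "\<And>j. j < m \<Longrightarrow> 0 \<le> r j" and r1: "(\<Sum>j<m. r j) \<le> 1"
    and supp: "\<And>i j. i < n \<Longrightarrow> j < m \<Longrightarrow> 0 < p i \<Longrightarrow> 0 < c i j \<Longrightarrow> 0 < r j"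
  shows "(\<Sum>i<n. p i * (\<Sum>j<m. c i j * ln (r j))) \<le> (\<Sum>i<n. p i * ln (p i))"
proof -
  define t where "t i = (\<Sum>j<m. c i j * r j)" for i
  have t0: "0 \<le> t i" if "i < n" for i unfolding t_def using c0 r0 that by (intro sum_nonneg) auto
  have tpos: "0 < t i" if i: "i < n" and pi: "0 < p i" for i
  proof -
    have "\<exists>j<m. 0 < c i j"
    proof (rule ccontr)
      assume "\<not> ?thesis"
      then have "\<forall>j<m. c i j = 0" using c0 i by force
      then have "(\<Sum>j<m. c i j) = 0" by simp
      with crow[OF i] show False by simp
    qed
    then obtain j where j: "j < m" "0 < c i j" by blast
    have "0 < c i j * r j" using j supp[OF i j(1) pi j(2)] by simp
    also have "c i j * r j \<le> t i" unfolding t_def using c0 r0 i j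
      by (intro member_le_sum) auto
    finally show ?thesis .
  qed
  have step: "p i * (\<Sum>j<m. c i j * ln (r j)) \<le> p i * ln (p i) + t i - p i" if i: "i < n" for i
  proof (cases "p i = 0")
    case True then show ?thesis using t0[OF i] by simp
  next
    case False
    then have pi: "0 < p i" using p0[OF i] by simp
    have ti: "0 < t i" by (rule tpos[OF i pi])
    have tm: "c i j * (ln (r j) - ln (t i)) \<le> c i j * (r j / t i - 1)" if j: "j < m" for j
    proof (cases "c i j = 0")
      case True then show ?thesis by simp
    next
      case False
      then have cij: "0 < c i j" using c0[OF i j] by simp
      have rj: "0 < r j" using supp[OF i j pi cij] .
      have "ln (r j) - ln (t i) = ln (r j / t i)" using rj ti by (simp add: ln_div)
      also have "\<dots> \<le> r j / t i - 1" using rj ti by (intro ln_le_minus_one) simp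
      finally show ?thesis using cij by (intro mult_left_mono) auto
    qed
    have "(\<Sum>j<m. c i j * (ln (r j) - ln (t i))) \<le> (\<Sum>j<m. c i j * (r j / t i - 1))"
      using tm by (intro sum_mono) auto
    also have "(\<Sum>j<m. c i j * (r j / t i - 1)) = (\<Sum>j<m. c i j * r j) / t i - (\<Sum>j<m. c i j)"
      by (simp add: right_diff_distrib sum_subtractf sum_divide_distrib)
    also have "\<dots> = 0" using ti crow[OF i] by (simp add: t_def)
    finally have "(\<Sum>j<m. c i j * ln (r j)) - ln (t i) * (\<Sum>j<m. c i j) \<le> 0"
      by (simp add: right_diff_distrib sum_subtractf sum_distrib_left mult.commute)
    then have jen: "(\<Sum>j<m. c i j * ln (r j)) \<le> ln (t i)" using crow[OF i] by simp
    have "ln (t i) - ln (p i) \<le> t i / p i - 1"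
      using ti pi ln_le_minus_one[of "t i / p i"] by (simp add: ln_div)
    then have "p i * (ln (t i) - ln (p i)) \<le> p i * (t i / p i - 1)" using pi by (intro mult_left_mono) auto
    then have "p i * ln (t i) \<le> p i * ln (p i) + t i - p i" using pi by (simp add: algebra_simps)
    moreover have "p i * (\<Sum>j<m. c i j * ln (r j)) \<le> p i * ln (t i)" using jen pi by (intro mult_left_mono) auto
    ultimately show ?thesis by linarith
  qed
  have "(\<Sum>i<n. p i * (\<Sum>j<m. c i j * ln (r j))) \<le> (\<Sum>i<n. p i * ln (p i) + t i - p i)"
    using step by (intro sum_mono) auto
  also have "\<dots> = (\<Sum>i<n. p i * ln (p i)) + (\<Sum>i<n. t i) - 1"
    using p1 by (simp add: sum.distrib sum_subtractf)
  also have "(\<Sum>i<n. t i) \<le> 1"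
  proof -
    have "(\<Sum>i<n. t i) = (\<Sum>j<m. r j * (\<Sum>i<n. c i j))"
      unfolding t_def by (subst sum.swap) (simp add: sum_distrib_left mult.commute)
    also have "\<dots> \<le> (\<Sum>j<m. r j * 1)"
      using ccol r0 by (intro sum_mono mult_left_mono) auto
    also have "\<dots> \<le> 1" using r1 by simp
    finally show ?thesis .
  qed
  finally show ?thesis by simp
qed

lemma entropy_max_abstract:
  fixes l :: "nat \<Rightarrow> real"
  assumes l0: "\<And>i. i < n \<Longrightarrow> 0 \<le> l i" and l1: "(\<Sum>i<n. l i) = 1"
  shows "- (\<Sum>i<n. l i * ln (l i)) \<le> ln (real n)"
proof -
  have n: "n > 0" using l1 by (cases n) auto
  have step: "l i * (- ln (l i)) \<le> l i * ln (real n) + 1 / real n - l i" if i: "i < n" for i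
  proof (cases "l i = 0")
    case True then show ?thesis using n by simp
  next
    case False
    then have li: "0 < l i" using l0[OF i] by simp
    have "ln (1 / (real n * l i)) \<le> 1 / (real n * l i) - 1" using li n by (intro ln_le_minus_one) simp
    moreover have "ln (1 / (real n * l i)) = - ln (real n) - ln (l i)" using li n by (simp add: ln_div ln_mult)
    ultimately have "- ln (real n) - ln (l i) \<le> 1 / (real n * l i) - 1" by simp
    then have "l i * (- ln (real n) - ln (l i)) \<le> l i * (1 / (real n * l i) - 1)" using li by (intro mult_left_mono) auto
    then show ?thesis using li n by (simp add: algebra_simps)
  qed
  have "(\<Sum>i<n. l i * (- ln (l i))) \<le> (\<Sum>i<n. l i * ln (real n) + 1 / real n - l i)"
    using step by (intro sum_mono) auto
  also have "\<dots> = ln (real n)" using l1 n by (simp add: sum.distrib sum_subtractf sum_distrib_right[symmetric])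
  finally show ?thesis by (simp add: sum_negf)
qed


lemma density_blkA: "density_op (D1*D2) \<rho> \<Longrightarrow> density_op D1 (blk 1 D1 D2 \<rho>)"
  using blk_density[of 1 D1 D2 \<rho>] by simp

lemma density_blkB: "density_op (D1*D2) \<rho> \<Longrightarrow> density_op D2 (blk D1 D2 1 \<rho>)"
  using blk_density[of D1 D2 1 \<rho>] by simp

lemma cmod_ip_sym: "cmod (ip n u w) = cmod (ip n w u)"
  by (metis complex_mod_cnj ip_cnj)

lemma onb_tens:
  assumes of: "onb D1 D1 f" and og: "onb D2 D2 g"
  shows "onb (D1*D2) (D1*D2) (\<lambda>j. tens D2 (f (j div D2)) (g (j mod D2)))"
  unfolding onb_def
proof (intro allI impI)
  fix i j assume i: "i < D1*D2" and j: "j < D1*D2"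
  have D2: "D2 > 0" using i by (cases D2) auto
  have id: "i div D2 < D1" "j div D2 < D1" using i j by (auto simp: less_mult_imp_div_less)
  have im: "i mod D2 < D2" "j mod D2 < D2" using D2 by auto
  have "(\<Sum>x<D1*D2. cnj (tens D2 (f (i div D2)) (g (i mod D2)) x) * tens D2 (f (j div D2)) (g (j mod D2)) x)
      = ip (D1*D2) (tens D2 (f (i div D2)) (g (i mod D2))) (tens D2 (f (j div D2)) (g (j mod D2)))"
    unfolding ip_def ..
  also have "\<dots> = ip D1 (f (i div D2)) (f (j div D2)) * ip D2 (g (i mod D2)) (g (j mod D2))" by (rule ip_tens)
  also have "\<dots> = (if i div D2 = j div D2 then 1 else 0) * (if i mod D2 = j mod D2 then 1 else 0)"
    using onb_ip[OF of id] onb_ip[OF og im] by simp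
  also have "\<dots> = (if i = j then 1 else 0)"
    by (auto, metis div_mult_mod_eq)
  finally show "(\<Sum>x<D1*D2. cnj (tens D2 (f (i div D2)) (g (i mod D2)) x) * tens D2 (f (j div D2)) (g (j mod D2)) x)
      = (if i = j then 1 else 0)" .
qed


lemma onb_unit:
  assumes o: "onb n k v" and i: "i < k"
  shows "(\<Sum>x<n. (cmod (v i x))\<^sup>2) = 1"
proof -
  have "ip n (v i) (v i) = 1" using onb_ip[OF o i i] by simp
  then have "complex_of_real (\<Sum>x<n. (cmod (v i x))\<^sup>2) = 1" by (simp only: ip_self)
  then show ?thesis by (simp only: of_real_eq_1_iff)
qed

theorem subadd:
  assumes d: "density_op (D1*D2) \<rho>"
  shows "vN_entropy \<rho> \<le> vN_entropy (blk 1 D1 D2 \<rho>) + vN_entropy (blk D1 D2 1 \<rho>)"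
proof -
  let ?N = "D1*D2"
  let ?A = "blk 1 D1 D2 \<rho>" and ?B = "blk D1 D2 1 \<rho>"
  have R: "\<rho> \<in> carrier_mat ?N ?N" using d unfolding density_op_def by auto
  obtain u p where ou: "onb ?N ?N u" and eu: "eigs ?N ?N \<rho> u p" and p0: "\<forall>i<?N. 0 \<le> p i"
    and p1: "(\<Sum>i<?N. p i) = 1" and Sr: "vN_entropy \<rho> = - (\<Sum>i<?N. p i * ln (p i))"
    using density_spectral[OF d] by blast
  obtain f al where of: "onb D1 D1 f" and ef: "eigs D1 D1 ?A f al" and al0: "\<forall>i<D1. 0 \<le> al i"
    and al1: "(\<Sum>i<D1. al i) = 1" and SA: "vN_entropy ?A = - (\<Sum>i<D1. al i * ln (al i))"
    using density_spectral[OF density_blkA[OF d]] by blast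
  obtain g be where og: "onb D2 D2 g" and eg: "eigs D2 D2 ?B g be" and be0: "\<forall>i<D2. 0 \<le> be i"
    and be1: "(\<Sum>i<D2. be i) = 1" and SB: "vN_entropy ?B = - (\<Sum>i<D2. be i * ln (be i))"
    using density_spectral[OF density_blkB[OF d]] by blast
  define W where "W j = tens D2 (f (j div D2)) (g (j mod D2))" for j
  have oW: "onb ?N ?N W" unfolding W_def by (rule onb_tens[OF of og])
  have D2: "D2 > 0" using p1 by (cases D2) auto
  have Widx: "W (a * D2 + b) = tens D2 (f a) (g b)" if "b < D2" for a b
    unfolding W_def using that by simp
  define r where "r j = al (j div D2) * be (j mod D2)" for j
  define c where "c i j = (cmod (ip ?N (W j) (u i)))\<^sup>2" for i j
  define q where "q j = (\<Sum>i<?N. p i * c i j)" for j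
  have unit_u: "(\<Sum>x<?N. (cmod (u i x))\<^sup>2) = 1" if "i < ?N" for i
    by (rule onb_unit[OF ou that])
  have unit_W: "(\<Sum>x<?N. (cmod (W j x))\<^sup>2) = 1" if "j < ?N" for j
    by (rule onb_unit[OF oW that])
  have crow: "(\<Sum>j<?N. c i j) = 1" if "i < ?N" for i
    unfolding c_def using parseval[OF oW, of "u i"] unit_u[OF that] by simp
  have ccol: "(\<Sum>i<?N. c i j) \<le> 1" if "j < ?N" for j
  proof -
    have "(\<Sum>i<?N. c i j) = (\<Sum>i<?N. (cmod (ip ?N (u i) (W j)))\<^sup>2)"
      unfolding c_def using cmod_ip_sym by simp
    also have "\<dots> = 1" using parseval[OF ou, of "W j"] unit_W[OF that] by simp
    finally show ?thesis by simp
  qed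
  have c0: "0 \<le> c i j" for i j unfolding c_def by simp
  have q0: "0 \<le> q j" for j unfolding q_def using p0 c0 by (intro sum_nonneg mult_nonneg_nonneg) auto
  have qquad: "of_real (q j) = quad ?N \<rho> (W j)" for j
  proof -
    have "quad ?N \<rho> (W j) = (\<Sum>i<?N. of_real (p i) * of_real ((cmod (ip ?N (u i) (W j)))\<^sup>2))"
      by (rule quad_decomp[OF R ou eu])
    also have "\<dots> = of_real (q j)" unfolding q_def c_def of_real_sum
      using cmod_ip_sym by (simp add: of_real_mult)
    finally show ?thesis by simp
  qed
  have qA: "(\<Sum>b<D2. q (a * D2 + b)) = al a" if a: "a < D1" for a
  proof -
    have "of_real (\<Sum>b<D2. q (a * D2 + b)) = (\<Sum>b<D2. quad ?N \<rho> (tens D2 (f a) (g b)))"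
      unfolding of_real_sum qquad using Widx by simp
    also have "\<dots> = quad D1 ?A (f a)" by (rule quad_tens_B[OF og])
    also have "\<dots> = of_real (al a)" by (rule quad_eig[OF of ef a])
    finally show ?thesis by (simp only: of_real_eq_iff)
  qed
  have qB: "(\<Sum>a<D1. q (a * D2 + b)) = be b" if b: "b < D2" for b
  proof -
    have "of_real (\<Sum>a<D1. q (a * D2 + b)) = (\<Sum>a<D1. quad ?N \<rho> (tens D2 (f a) (g b)))"
      unfolding of_real_sum qquad using Widx b by simp
    also have "\<dots> = quad D2 ?B (g b)" by (rule quad_tens_A[OF of])
    also have "\<dots> = of_real (be b)" by (rule quad_eig[OF og eg b])
    finally show ?thesis by (simp only: of_real_eq_iff)
  qed
  have qleA: "q (a * D2 + b) \<le> al a" if "a < D1" "b < D2" for a b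
  proof -
    have "q (a * D2 + b) \<le> (\<Sum>b<D2. q (a * D2 + b))" using that q0 by (intro member_le_sum) auto
    then show ?thesis using qA[OF that(1)] by simp
  qed
  have qleB: "q (a * D2 + b) \<le> be b" if "a < D1" "b < D2" for a b
  proof -
    have "q (a * D2 + b) \<le> (\<Sum>a<D1. q (a * D2 + b))" using that q0 by (intro member_le_sum) auto
    then show ?thesis using qB[OF that(2)] by simp
  qed
  have jdec: "j = (j div D2) * D2 + j mod D2" for j by simp
  have jd: "j div D2 < D1" "j mod D2 < D2" if "j < ?N" for j
    using that D2 by (auto simp: less_mult_imp_div_less)
  have qpos_r: "0 < r j" if j: "j < ?N" and qj: "0 < q j" for j
  proof -
    have "0 < al (j div D2)" using qleA[OF jd[OF j]] qj jdec[of j] by simp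
    moreover have "0 < be (j mod D2)" using qleB[OF jd[OF j]] qj jdec[of j] by simp
    ultimately show ?thesis unfolding r_def by simp
  qed
  have r0: "0 \<le> r j" if "j < ?N" for j unfolding r_def using al0 be0 jd[OF that] by simp
  have r1: "(\<Sum>j<?N. r j) = 1"
  proof -
    have "(\<Sum>j<?N. r j) = (\<Sum>a<D1. \<Sum>b<D2. al a * be b)" unfolding sum_split2 r_def by simp
    also have "\<dots> = 1" using al1 be1 by (simp add: sum_distrib_left[symmetric] sum_distrib_right[symmetric])
    finally show ?thesis .
  qed
  have supp: "0 < r j" if "i < ?N" "j < ?N" "0 < p i" "0 < c i j" for i j
  proof -
    have "0 < p i * c i j" using that by simp
    also have "p i * c i j \<le> q j" unfolding q_def using that p0 c0
      by (intro member_le_sum[where f="\<lambda>i. p i * c i j"]) (auto intro: mult_nonneg_nonneg)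
    finally show ?thesis using qpos_r that by simp
  qed
  have K: "(\<Sum>i<?N. p i * (\<Sum>j<?N. c i j * ln (r j))) \<le> (\<Sum>i<?N. p i * ln (p i))"
    by (rule klein_abstract) (use p0 p1 c0 crow ccol r0 r1 supp in auto)
  have "(\<Sum>i<?N. p i * (\<Sum>j<?N. c i j * ln (r j))) = (\<Sum>i<?N. \<Sum>j<?N. p i * c i j * ln (r j))"
    by (simp add: sum_distrib_left mult.assoc)
  also have "\<dots> = (\<Sum>j<?N. \<Sum>i<?N. p i * c i j * ln (r j))" by (rule sum.swap)
  also have "\<dots> = (\<Sum>j<?N. q j * ln (r j))" unfolding q_def by (simp add: sum_distrib_right)
  also have "\<dots> = (\<Sum>a<D1. \<Sum>b<D2. q (a*D2+b) * ln (al a) + q (a*D2+b) * ln (be b))"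
    unfolding sum_split2
  proof (intro sum.cong refl)
    fix a b assume a: "a \<in> {..<D1}" and b: "b \<in> {..<D2}"
    show "q (a*D2+b) * ln (r (a*D2+b)) = q (a*D2+b) * ln (al a) + q (a*D2+b) * ln (be b)"
    proof (cases "q (a*D2+b) = 0")
      case True then show ?thesis by simp
    next
      case False
      then have qp: "0 < q (a*D2+b)" using q0 by (simp add: less_le)
      have "0 < al a" using qleA[of a b] a b qp by simp
      moreover have "0 < be b" using qleB[of a b] a b qp by simp
      moreover have "r (a*D2+b) = al a * be b" unfolding r_def using b by simp
      ultimately show ?thesis by (simp add: ln_mult distrib_left)
    qed
  qed
  also have "\<dots> = (\<Sum>a<D1. al a * ln (al a)) + (\<Sum>b<D2. be b * ln (be b))"
  proof -
    have "(\<Sum>a<D1. \<Sum>b<D2. q (a*D2+b) * ln (al a)) = (\<Sum>a<D1. al a * ln (al a))"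
      by (intro sum.cong refl) (simp add: sum_distrib_right[symmetric] qA)
    moreover have "(\<Sum>a<D1. \<Sum>b<D2. q (a*D2+b) * ln (be b)) = (\<Sum>b<D2. be b * ln (be b))"
      by (subst sum.swap) (intro sum.cong refl, simp add: sum_distrib_right[symmetric] qB)
    ultimately show ?thesis by (simp add: sum.distrib)
  qed
  finally have "(\<Sum>a<D1. al a * ln (al a)) + (\<Sum>b<D2. be b * ln (be b)) \<le> (\<Sum>i<?N. p i * ln (p i))"
    using K by simp
  then show ?thesis using Sr SA SB by simp
qed


lemma ip_herm_eig:
  assumes P: "P \<in> carrier_mat n n" and h: "herm n P" and e: "eigs n n P v l" and k: "k < n"
  shows "ip n (v k) (\<lambda>c. \<Sum>a<n. P $$ (c,a) * w a) = of_real (l k) * ip n (v k) w"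
proof -
  have "of_real (l k) * ip n (v k) w = (\<Sum>a<n. cnj (of_real (l k) * v k a) * w a)"
    unfolding ip_def by (simp add: sum_distrib_left mult_ac)
  also have "\<dots> = (\<Sum>a<n. cnj (\<Sum>c<n. P $$ (a,c) * v k c) * w a)"
    using e k unfolding eigs_def by (intro sum.cong refl) simp
  also have "\<dots> = (\<Sum>a<n. \<Sum>c<n. cnj (v k c) * (P $$ (c,a) * w a))"
  proof (intro sum.cong refl)
    fix a assume a: "a \<in> {..<n}"
    show "cnj (\<Sum>c<n. P $$ (a,c) * v k c) * w a = (\<Sum>c<n. cnj (v k c) * (P $$ (c,a) * w a))"
      unfolding cnj_sum sum_distrib_right
    proof (intro sum.cong refl)
      fix c assume c: "c \<in> {..<n}"
      have "P $$ (c,a) = cnj (P $$ (a,c))" using hermD[OF h, of c a] a c by simp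
      then show "cnj (P $$ (a,c) * v k c) * w a = cnj (v k c) * (P $$ (c,a) * w a)" by simp
    qed
  qed
  also have "\<dots> = ip n (v k) (\<lambda>c. \<Sum>a<n. P $$ (c,a) * w a)"
    unfolding ip_def by (subst sum.swap) (simp add: sum_distrib_left)
  finally show ?thesis by simp
qed

lemma cmod_sq_ip: "(cmod (ip n u w))\<^sup>2 = Re (cnj (ip n u w) * ip n u w)"
  by (simp only: cnj_sq Re_complex_of_real)

lemma pure_entropy_eq:
  fixes M :: "nat \<Rightarrow> nat \<Rightarrow> complex" and D1 D2 :: nat
  defines "P \<equiv> mat D1 D1 (\<lambda>(a,c). \<Sum>y<D2. M a y * cnj (M c y))"
    and "Q \<equiv> mat D2 D2 (\<lambda>(y,y'). \<Sum>a<D1. M a y * cnj (M a y'))"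
  shows "vN_entropy P = vN_entropy Q"
proof -
  have Pc: "P \<in> carrier_mat D1 D1" and Qc: "Q \<in> carrier_mat D2 D2" unfolding P_def Q_def by auto
  have Pe: "P $$ (a,c) = (\<Sum>y<D2. M a y * cnj (M c y))" if "a < D1" "c < D1" for a c
    using that unfolding P_def by simp
  have Qe: "Q $$ (y,y') = (\<Sum>a<D1. M a y * cnj (M a y'))" if "y < D2" "y' < D2" for y y'
    using that unfolding Q_def by simp
  have hP: "herm D1 P" unfolding herm_def using Pe by (simp add: mult.commute)
  have hQ: "herm D2 Q" unfolding herm_def using Qe by (simp add: mult.commute)
  obtain v al where ov: "onb D1 D1 v" and ev: "eigs D1 D1 P v al" using spectral[OF Pc hP] by blast
  obtain g be where og: "onb D2 D2 g" and eg: "eigs D2 D2 Q g be" using spectral[OF Qc hQ] by blast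
  define Mh where "Mh b a = (\<Sum>y<D2. M a y * cnj (g b y))" for b a
  define Z where "Z k y = (\<Sum>a<D1. cnj (v k a) * M a y)" for k y
  define X where "X k b = ip D1 (v k) (Mh b)" for k b
  have X2: "X k b = ip D2 (g b) (Z k)" for k b
    unfolding X_def ip_def Mh_def Z_def
    by (simp add: sum_distrib_left sum_distrib_right mult_ac) (rule sum.swap)
  have PMh: "(\<Sum>a<D1. P $$ (c,a) * Mh b a) = of_real (be b) * Mh b c" if c: "c < D1" and b: "b < D2" for c b
  proof -
    have "(\<Sum>a<D1. P $$ (c,a) * Mh b a) = (\<Sum>a<D1. \<Sum>y'<D2. \<Sum>y<D2. M c y' * (cnj (M a y') * M a y * cnj (g b y)))"
      unfolding Mh_def using c by (intro sum.cong refl) (simp add: Pe sum_distrib_left sum_distrib_right mult_ac)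
    also have "\<dots> = (\<Sum>y'<D2. M c y' * (\<Sum>y<D2. (\<Sum>a<D1. cnj (M a y') * M a y) * cnj (g b y)))"
      by (subst sum_pull3) (simp add: sum_distrib_left sum_distrib_right mult_ac)
    also have "\<dots> = (\<Sum>y'<D2. M c y' * cnj (\<Sum>y<D2. Q $$ (y',y) * g b y))"
    proof (intro sum.cong refl)
      fix y' assume y': "y' \<in> {..<D2}"
      have "cnj (\<Sum>y<D2. Q $$ (y',y) * g b y) = (\<Sum>y<D2. (\<Sum>a<D1. cnj (M a y') * M a y) * cnj (g b y))"
        using y' by (simp add: Qe mult.commute)
      then show "M c y' * (\<Sum>y<D2. (\<Sum>a<D1. cnj (M a y') * M a y) * cnj (g b y)) = M c y' * cnj (\<Sum>y<D2. Q $$ (y',y) * g b y)"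
        by simp
    qed
    also have "\<dots> = (\<Sum>y'<D2. M c y' * (of_real (be b) * cnj (g b y')))"
      using eg b unfolding eigs_def by (intro sum.cong refl) simp
    also have "\<dots> = of_real (be b) * Mh b c" unfolding Mh_def by (simp add: sum_distrib_left mult_ac)
    finally show ?thesis .
  qed
  have X1: "(al k - be b) * (cmod (X k b))\<^sup>2 = 0" if k: "k < D1" and b: "b < D2" for k b
  proof -
    have "of_real (al k) * X k b = ip D1 (v k) (\<lambda>c. \<Sum>a<D1. P $$ (c,a) * Mh b a)"
      unfolding X_def by (rule ip_herm_eig[OF Pc hP ev k, symmetric])
    also have "\<dots> = ip D1 (v k) (\<lambda>c. of_real (be b) * Mh b c)"
      unfolding ip_def using PMh b by simp
    also have "\<dots> = of_real (be b) * X k b" unfolding X_def ip_def by (simp add: sum_distrib_left mult_ac)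
    finally have "(of_real (al k) - of_real (be b)) * X k b = 0" by (simp add: algebra_simps)
    then have "al k = be b \<or> X k b = 0" by auto
    then show ?thesis by auto
  qed
  have S1: "(\<Sum>b<D2. (cmod (X k b))\<^sup>2) = al k" if k: "k < D1" for k
  proof -
    have "(\<Sum>b<D2. (cmod (X k b))\<^sup>2) = (\<Sum>y<D2. (cmod (Z k y))\<^sup>2)"
      unfolding X2 by (rule parseval[OF og])
    also have "complex_of_real \<dots> = ip D2 (Z k) (Z k)" by (rule ip_self[symmetric])
    also have "\<dots> = quad D1 P (v k)"
    proof -
      have "ip D2 (Z k) (Z k) = (\<Sum>y<D2. \<Sum>a<D1. \<Sum>c<D1. cnj (v k c) * (M c y * cnj (M a y) * v k a))"
        unfolding ip_def Z_def by (simp add: sum_distrib_left sum_distrib_right mult_ac)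
      also have "\<dots> = (\<Sum>c<D1. \<Sum>a<D1. \<Sum>y<D2. cnj (v k c) * (M c y * cnj (M a y) * v k a))"
        by (subst sum.swap, subst sum_pull3, rule refl)
      also have "\<dots> = quad D1 P (v k)"
        unfolding quad_def by (intro sum.cong refl) (simp add: Pe sum_distrib_left sum_distrib_right mult_ac)
      finally show ?thesis .
    qed
    also have "\<dots> = of_real (al k)" by (rule quad_eig[OF ov ev k])
    finally show ?thesis by (simp only: of_real_eq_iff)
  qed
  have S2: "(\<Sum>k<D1. (cmod (X k b))\<^sup>2) = be b" if b: "b < D2" for b
  proof -
    have "(\<Sum>k<D1. (cmod (X k b))\<^sup>2) = (\<Sum>a<D1. (cmod (Mh b a))\<^sup>2)"
      unfolding X_def by (rule parseval[OF ov])
    also have "complex_of_real \<dots> = ip D1 (Mh b) (Mh b)" by (rule ip_self[symmetric])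
    also have "\<dots> = cnj (quad D2 Q (g b))"
    proof -
      have "ip D1 (Mh b) (Mh b) = (\<Sum>a<D1. \<Sum>y<D2. \<Sum>y'<D2. g b y * (cnj (M a y) * M a y' * cnj (g b y')))"
        unfolding ip_def Mh_def by (simp add: sum_distrib_left sum_distrib_right mult_ac)
      also have "\<dots> = (\<Sum>y<D2. \<Sum>y'<D2. \<Sum>a<D1. g b y * (cnj (M a y) * M a y' * cnj (g b y')))"
        by (rule sum_pull3)
      also have "\<dots> = cnj (quad D2 Q (g b))"
        unfolding quad_def cnj_sum
        by (intro sum.cong refl) (simp add: Qe sum_distrib_left sum_distrib_right mult_ac)
      finally show ?thesis .
    qed
    also have "\<dots> = of_real (be b)" using quad_eig[OF og eg b] by simp
    finally show ?thesis by (simp only: of_real_eq_iff)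
  qed
  have "vN_entropy P = - (\<Sum>k<D1. al k * ln (al k))" by (rule entropy_onb[OF Pc ov ev])
  also have "(\<Sum>k<D1. al k * ln (al k)) = (\<Sum>k<D1. \<Sum>b<D2. (cmod (X k b))\<^sup>2 * ln (al k))"
    by (intro sum.cong refl) (simp add: S1 sum_distrib_right[symmetric])
  also have "\<dots> = (\<Sum>k<D1. \<Sum>b<D2. (cmod (X k b))\<^sup>2 * ln (be b))"
  proof (intro sum.cong refl)
    fix k b assume "k \<in> {..<D1}" "b \<in> {..<D2}"
    then have "(al k - be b) * (cmod (X k b))\<^sup>2 = 0" using X1 by simp
    then have "al k = be b \<or> (cmod (X k b))\<^sup>2 = 0" by simp
    then show "(cmod (X k b))\<^sup>2 * ln (al k) = (cmod (X k b))\<^sup>2 * ln (be b)" by auto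
  qed
  also have "\<dots> = (\<Sum>b<D2. be b * ln (be b))"
    by (subst sum.swap) (simp add: S2 sum_distrib_right[symmetric])
  also have "- \<dots> = vN_entropy Q" by (rule entropy_onb[OF Qc og eg, symmetric])
  finally show ?thesis .
qed


definition pmat :: "nat \<Rightarrow> (nat \<Rightarrow> complex) \<Rightarrow> complex mat" where
  "pmat K \<psi> = mat K K (\<lambda>(s,t). \<psi> s * cnj (\<psi> t))"

lemma blk_pmat:
  assumes "E * D * F = K" "a < D" "b < D"
  shows "blk E D F (pmat K \<psi>) $$ (a,b) = (\<Sum>x<E. \<Sum>z<F. \<psi> (x*(D*F) + a*F + z) * cnj (\<psi> (x*(D*F) + b*F + z)))"
  using assms idx3_lt[of _ E _ D _ F] by (simp add: blk_entry pmat_def)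

lemma pure_blk:
  "vN_entropy (blk 1 D1 D2 (pmat (D1*D2) \<psi>)) = vN_entropy (blk D1 D2 1 (pmat (D1*D2) \<psi>))"
proof -
  define M where "M a y = \<psi> (a*D2 + y)" for a y
  have "blk 1 D1 D2 (pmat (D1*D2) \<psi>) = mat D1 D1 (\<lambda>(a,c). \<Sum>y<D2. M a y * cnj (M c y))"
    by (rule eq_matI) (auto simp: blk_pmat M_def)
  moreover have "blk D1 D2 1 (pmat (D1*D2) \<psi>) = mat D2 D2 (\<lambda>(y,y'). \<Sum>a<D1. M a y * cnj (M a y'))"
    by (rule eq_matI) (auto simp: blk_pmat M_def)
  moreover have "vN_entropy (mat D1 D1 (\<lambda>(a,c). \<Sum>y<D2. M a y * cnj (M c y)))
      = vN_entropy (mat D2 D2 (\<lambda>(y,y'). \<Sum>a<D1. M a y * cnj (M a y')))"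
    by (rule pure_entropy_eq)
  ultimately show ?thesis by simp
qed

lemma pmat_density:
  assumes n: "(\<Sum>s<K. (cmod (\<psi> s))\<^sup>2) = 1"
  shows "density_op K (pmat K \<psi>)"
proof -
  have C: "pmat K \<psi> \<in> carrier_mat K K" unfolding pmat_def by simp
  have h: "herm K (pmat K \<psi>)" unfolding herm_def pmat_def by simp
  have p: "psd (pmat K \<psi>)"
  proof (rule psd_intro[OF C])
    fix x :: "nat \<Rightarrow> complex"
    have "(\<Sum>a<K. cnj (x a) * (\<Sum>b<K. pmat K \<psi> $$ (a,b) * x b)) = cnj (ip K \<psi> x) * ip K \<psi> x"
      unfolding pmat_def ip_def apply (simp add: sum_distrib_left sum_distrib_right mult_ac)
      by (rule sum.swap)
    also have "\<dots> = of_real ((cmod (ip K \<psi> x))\<^sup>2)" by (rule cnj_sq)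
    finally show "0 \<le> Re (\<Sum>a<K. cnj (x a) * (\<Sum>b<K. pmat K \<psi> $$ (a,b) * x b))" by simp
  qed
  have t: "mtrace (pmat K \<psi>) = 1"
  proof -
    have "mtrace (pmat K \<psi>) = (\<Sum>s<K. of_real ((cmod (\<psi> s))\<^sup>2))"
      unfolding mtrace_def
    proof (intro sum.cong)
      show "{..<dim_row (pmat K \<psi>)} = {..<K}" unfolding pmat_def by simp
      fix s assume "s \<in> {..<K}"
      then have "pmat K \<psi> $$ (s,s) = \<psi> s * cnj (\<psi> s)" unfolding pmat_def by simp
      then show "pmat K \<psi> $$ (s,s) = of_real ((cmod (\<psi> s))\<^sup>2)" by (simp only: complex_norm_square)
    qed
    also have "\<dots> = 1" using n by (simp only: of_real_sum[symmetric]) simp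
    finally show ?thesis .
  qed
  show ?thesis unfolding density_op_def using C h p t herm_hermitian[OF C h] by simp
qed

lemma diag_entropy:
  assumes "\<And>i j. i < n \<Longrightarrow> j < n \<Longrightarrow> A $$ (i,j) = (if i = j then of_real (p i) else 0)"
    and "A \<in> carrier_mat n n"
  shows "vN_entropy A = - (\<Sum>i<n. p i * ln (p i))"
proof (rule entropy_onb[OF assms(2)])
  show "onb n n (\<lambda>i x. if i = x then 1 else 0)" unfolding onb_def by (simp add: if_distrib sum.delta cong: if_cong)
  show "eigs n n A (\<lambda>i x. if i = x then 1 else 0) p" unfolding eigs_def using assms(1)
    by (simp add: if01_mult sum.delta')
qed


lemma sqrt_mult_cnj: "0 \<le> x \<Longrightarrow> complex_of_real (sqrt x) * cnj (complex_of_real (sqrt x)) = of_real x"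
  by (simp flip: of_real_mult)

lemma araki_lieb1:
  assumes d: "density_op (D1*D2) \<rho>"
  shows "vN_entropy (blk 1 D1 D2 \<rho>) \<le> vN_entropy \<rho> + vN_entropy (blk D1 D2 1 \<rho>)"
proof -
  define N where "N = D1*D2"
  have dN: "density_op N \<rho>" using d unfolding N_def .
  have R: "\<rho> \<in> carrier_mat N N" using dN unfolding density_op_def by auto
  obtain u p where ou: "onb N N u" and eu: "eigs N N \<rho> u p" and p0: "\<forall>i<N. 0 \<le> p i"
    and p1: "(\<Sum>i<N. p i) = 1" and Sr: "vN_entropy \<rho> = - (\<Sum>i<N. p i * ln (p i))"
    using density_spectral[OF dN] by blast
  define \<psi> where "\<psi> s = complex_of_real (sqrt (p (s mod N))) * u (s mod N) (s div N)" for s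
  define K where "K = D1*(D2*N)"
  have KN: "K = N*N" unfolding K_def N_def by (simp add: mult_ac)
  define \<Psi> where "\<Psi> = pmat K \<psi>"
  have psi_idx: "\<psi> (t*N + i) = complex_of_real (sqrt (p i)) * u i t" if "i < N" for t i
    unfolding \<psi>_def using that by simp
  have norm: "(\<Sum>s<K. (cmod (\<psi> s))\<^sup>2) = 1"
  proof -
    have "(\<Sum>s<K. (cmod (\<psi> s))\<^sup>2) = (\<Sum>t<N. \<Sum>i<N. (cmod (\<psi> (t*N + i)))\<^sup>2)"
      unfolding KN by (rule sum_split2)
    also have "\<dots> = (\<Sum>t<N. \<Sum>i<N. p i * (cmod (u i t))\<^sup>2)"
      using p0 by (intro sum.cong refl) (simp add: psi_idx norm_mult power_mult_distrib)
    also have "\<dots> = (\<Sum>i<N. p i * (\<Sum>t<N. (cmod (u i t))\<^sup>2))"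
      by (subst sum.swap) (simp add: sum_distrib_left)
    also have "\<dots> = (\<Sum>i<N. p i)" using onb_unit[OF ou] by simp
    finally show ?thesis using p1 by simp
  qed
  have dPsi: "density_op K \<Psi>" unfolding \<Psi>_def by (rule pmat_density[OF norm])
  have F2: "blk 1 N N \<Psi> = \<rho>"
  proof (rule eq_matI)
    fix t t' assume "t < dim_row \<rho>" "t' < dim_col \<rho>"
    then have t: "t < N" and t': "t' < N" using R by auto
    have "blk 1 N N \<Psi> $$ (t,t') = (\<Sum>z<N. \<psi> (t*N + z) * cnj (\<psi> (t'*N + z)))"
      unfolding \<Psi>_def using t t' KN by (simp add: blk_pmat)
    also have "\<dots> = (\<Sum>z<N. of_real (p z) * u z t * cnj (u z t'))"
    proof (intro sum.cong refl)
      fix z assume z: "z \<in> {..<N}"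
      have "\<psi> (t*N + z) * cnj (\<psi> (t'*N + z)) = (of_real (sqrt (p z)) * cnj (of_real (sqrt (p z)))) * u z t * cnj (u z t')"
        using z unfolding psi_idx[of z t, OF z[simplified]] psi_idx[of z t', OF z[simplified]] by (simp add: mult_ac)
      also have "\<dots> = of_real (p z) * u z t * cnj (u z t')"
      proof -
        have pz: "0 \<le> p z" using p0 z by simp
        show ?thesis by (simp only: sqrt_mult_cnj[OF pz])
      qed
      finally show "\<psi> (t*N + z) * cnj (\<psi> (t'*N + z)) = of_real (p z) * u z t * cnj (u z t')" .
    qed
    also have "\<dots> = \<rho> $$ (t,t')" using eig_decomp[OF R ou eu t t'] by simp
    finally show "blk 1 N N \<Psi> $$ (t,t') = \<rho> $$ (t,t')" .
  qed (use R in auto)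
  have F3: "vN_entropy (blk N N 1 \<Psi>) = vN_entropy \<rho>"
  proof -
    have "vN_entropy (blk N N 1 \<Psi>) = - (\<Sum>i<N. p i * ln (p i))"
    proof (rule diag_entropy)
      fix i j assume i: "i < N" and j: "j < N"
      have "blk N N 1 \<Psi> $$ (i,j) = (\<Sum>t<N. \<psi> (t*N + i) * cnj (\<psi> (t*N + j)))"
        unfolding \<Psi>_def using i j KN by (simp add: blk_pmat)
      also have "\<dots> = of_real (sqrt (p i)) * cnj (of_real (sqrt (p j))) * ip N (u j) (u i)"
        unfolding ip_def using i j by (simp add: psi_idx sum_distrib_left mult_ac)
      also have "\<dots> = (if i = j then of_real (p i) else 0)"
      proof -
        have pj: "0 \<le> p j" using p0 j by simp
        show ?thesis using onb_ip[OF ou j i] sqrt_mult_cnj[OF pj] by auto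
      qed
      finally show "blk N N 1 \<Psi> $$ (i,j) = (if i = j then of_real (p i) else 0)" .
    qed simp
    then show ?thesis using Sr by simp
  qed
  have pure: "vN_entropy (blk 1 D1 (D2*N) \<Psi>) = vN_entropy (blk D1 (D2*N) 1 \<Psi>)"
    unfolding \<Psi>_def K_def by (rule pure_blk)
  have c1: "blk 1 D1 (D2*N) \<Psi> = blk 1 D1 D2 \<rho>"
    using blk_comp[of 1 D1 D2 1 N \<Psi>] F2 unfolding N_def by simp
  define BC where "BC = blk D1 (D2*N) 1 \<Psi>"
  have dBC: "density_op (D2*N) BC" unfolding BC_def
    using blk_density[of D1 "D2*N" 1 \<Psi>] dPsi unfolding K_def by (simp add: mult.assoc)
  have sa: "vN_entropy BC \<le> vN_entropy (blk 1 D2 N BC) + vN_entropy (blk D2 N 1 BC)"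
    by (rule subadd[OF dBC])
  have c2: "blk 1 D2 N BC = blk D1 D2 1 \<rho>"
  proof -
    have "blk 1 D2 N BC = blk D1 D2 N \<Psi>"
      unfolding BC_def using blk_comp[of 1 D2 N D1 1 \<Psi>] by (simp add: mult_ac)
    moreover have "blk D1 D2 1 \<rho> = blk D1 D2 N \<Psi>"
      using blk_comp[of D1 D2 1 1 N \<Psi>] F2 unfolding N_def by (simp add: mult_ac)
    ultimately show ?thesis by simp
  qed
  have c3: "blk D2 N 1 BC = blk N N 1 \<Psi>"
    unfolding BC_def using blk_comp[of D2 N 1 D1 1 \<Psi>] unfolding N_def by (simp add: mult_ac)
  show ?thesis using pure c1 sa c2 c3 F3 unfolding BC_def by simp
qed

lemma araki_lieb2:
  assumes d: "density_op (D1*D2) \<rho>"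
  shows "vN_entropy (blk D1 D2 1 \<rho>) \<le> vN_entropy \<rho> + vN_entropy (blk 1 D1 D2 \<rho>)"
proof -
  define N where "N = D1*D2"
  have dN: "density_op N \<rho>" using d unfolding N_def .
  have R: "\<rho> \<in> carrier_mat N N" using dN unfolding density_op_def by auto
  obtain u p where ou: "onb N N u" and eu: "eigs N N \<rho> u p" and p0: "\<forall>i<N. 0 \<le> p i"
    and p1: "(\<Sum>i<N. p i) = 1" and Sr: "vN_entropy \<rho> = - (\<Sum>i<N. p i * ln (p i))"
    using density_spectral[OF dN] by blast
  define \<psi> where "\<psi> s = complex_of_real (sqrt (p (s div N))) * u (s div N) (s mod N)" for s
  define K where "K = N*D1*D2"
  have KN: "K = N*N" unfolding K_def N_def by (simp add: mult_ac)
  define \<Psi> where "\<Psi> = pmat K \<psi>"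
  have psi_idx: "\<psi> (i*N + t) = complex_of_real (sqrt (p i)) * u i t" if "t < N" for t i
    unfolding \<psi>_def using that by simp
  have norm: "(\<Sum>s<K. (cmod (\<psi> s))\<^sup>2) = 1"
  proof -
    have "(\<Sum>s<K. (cmod (\<psi> s))\<^sup>2) = (\<Sum>i<N. \<Sum>t<N. (cmod (\<psi> (i*N + t)))\<^sup>2)"
      unfolding KN by (rule sum_split2)
    also have "\<dots> = (\<Sum>i<N. \<Sum>t<N. p i * (cmod (u i t))\<^sup>2)"
      using p0 by (intro sum.cong refl) (simp add: psi_idx norm_mult power_mult_distrib)
    also have "\<dots> = (\<Sum>i<N. p i * (\<Sum>t<N. (cmod (u i t))\<^sup>2))"
      by (simp add: sum_distrib_left)
    also have "\<dots> = (\<Sum>i<N. p i)" using onb_unit[OF ou] by simp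
    finally show ?thesis using p1 by simp
  qed
  have dPsi: "density_op K \<Psi>" unfolding \<Psi>_def by (rule pmat_density[OF norm])
  have F2: "blk N N 1 \<Psi> = \<rho>"
  proof (rule eq_matI)
    fix t t' assume "t < dim_row \<rho>" "t' < dim_col \<rho>"
    then have t: "t < N" and t': "t' < N" using R by auto
    have "blk N N 1 \<Psi> $$ (t,t') = (\<Sum>z<N. \<psi> (z*N + t) * cnj (\<psi> (z*N + t')))"
      unfolding \<Psi>_def using t t' KN by (simp add: blk_pmat)
    also have "\<dots> = (\<Sum>z<N. of_real (p z) * u z t * cnj (u z t'))"
    proof (intro sum.cong refl)
      fix z assume z: "z \<in> {..<N}"
      have "\<psi> (z*N + t) * cnj (\<psi> (z*N + t')) = (of_real (sqrt (p z)) * cnj (of_real (sqrt (p z)))) * u z t * cnj (u z t')"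
        unfolding psi_idx[OF t] psi_idx[OF t'] by (simp add: mult_ac)
      also have "\<dots> = of_real (p z) * u z t * cnj (u z t')"
      proof -
        have pz: "0 \<le> p z" using p0 z by simp
        show ?thesis by (simp only: sqrt_mult_cnj[OF pz])
      qed
      finally show "\<psi> (z*N + t) * cnj (\<psi> (z*N + t')) = of_real (p z) * u z t * cnj (u z t')" .
    qed
    also have "\<dots> = \<rho> $$ (t,t')" using eig_decomp[OF R ou eu t t'] by simp
    finally show "blk N N 1 \<Psi> $$ (t,t') = \<rho> $$ (t,t')" .
  qed (use R in auto)
  have F3: "vN_entropy (blk 1 N N \<Psi>) = vN_entropy \<rho>"
  proof -
    have "vN_entropy (blk 1 N N \<Psi>) = - (\<Sum>i<N. p i * ln (p i))"
    proof (rule diag_entropy)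
      fix i j assume i: "i < N" and j: "j < N"
      have "blk 1 N N \<Psi> $$ (i,j) = (\<Sum>t<N. \<psi> (i*N + t) * cnj (\<psi> (j*N + t)))"
        unfolding \<Psi>_def using i j KN by (simp add: blk_pmat)
      also have "\<dots> = (\<Sum>t<N. (of_real (sqrt (p i)) * u i t) * cnj (of_real (sqrt (p j)) * u j t))"
        by (intro sum.cong refl) (simp add: psi_idx)
      also have "\<dots> = of_real (sqrt (p i)) * cnj (of_real (sqrt (p j))) * ip N (u j) (u i)"
        unfolding ip_def by (simp add: sum_distrib_left mult_ac)
      also have "\<dots> = (if i = j then of_real (p i) else 0)"
      proof -
        have pj: "0 \<le> p j" using p0 j by simp
        show ?thesis using onb_ip[OF ou j i] sqrt_mult_cnj[OF pj] by auto
      qed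
      finally show "blk 1 N N \<Psi> $$ (i,j) = (if i = j then of_real (p i) else 0)" .
    qed simp
    then show ?thesis using Sr by simp
  qed
  have pure: "vN_entropy (blk 1 (N*D1) D2 \<Psi>) = vN_entropy (blk (N*D1) D2 1 \<Psi>)"
    unfolding \<Psi>_def K_def by (rule pure_blk)
  have c1: "blk (N*D1) D2 1 \<Psi> = blk D1 D2 1 \<rho>"
    using blk_comp[of D1 D2 1 N 1 \<Psi>] F2 unfolding N_def by (simp add: mult_ac)
  define CA where "CA = blk 1 (N*D1) D2 \<Psi>"
  have dCA: "density_op (N*D1) CA" unfolding CA_def
    using blk_density[of 1 "N*D1" D2 \<Psi>] dPsi unfolding K_def by simp
  have sa: "vN_entropy CA \<le> vN_entropy (blk 1 N D1 CA) + vN_entropy (blk N D1 1 CA)"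
    by (rule subadd[OF dCA])
  have c2: "blk N D1 1 CA = blk 1 D1 D2 \<rho>"
  proof -
    have "blk N D1 1 CA = blk N D1 D2 \<Psi>"
      unfolding CA_def using blk_comp[of N D1 1 1 D2 \<Psi>] by (simp add: mult_ac)
    moreover have "blk 1 D1 D2 \<rho> = blk N D1 D2 \<Psi>"
      using blk_comp[of 1 D1 D2 N 1 \<Psi>] F2 unfolding N_def by (simp add: mult_ac)
    ultimately show ?thesis by simp
  qed
  have c3: "blk 1 N D1 CA = blk 1 N N \<Psi>"
    unfolding CA_def using blk_comp[of 1 N D1 1 D2 \<Psi>] unfolding N_def by (simp add: mult_ac)
  show ?thesis using pure c1 sa c2 c3 F3 unfolding CA_def by simp
qed


lemma entropy_le_ln:
  assumes "density_op n A"
  shows "vN_entropy A \<le> ln (real n)"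
proof -
  obtain v l where "\<forall>i<n. 0 \<le> l i" "(\<Sum>i<n. l i) = 1" "vN_entropy A = - (\<Sum>i<n. l i * ln (l i))"
    using density_spectral[OF assms] by blast
  then show ?thesis using entropy_max_abstract[of n l] by simp
qed

lemma entropy_tensor_mixed:
  assumes sd: "density_op D \<sigma>" and dpos: "d > 0"
    and R: "\<rho> \<in> carrier_mat (D*d) (D*d)"
    and ent: "\<And>a b. a < D*d \<Longrightarrow> b < D*d \<Longrightarrow>
       \<rho> $$ (a,b) = \<sigma> $$ (a div d, b div d) * (if a mod d = b mod d then 1 / of_nat d else 0)"
  shows "vN_entropy \<rho> = vN_entropy \<sigma> + ln (real d)"
proof -
  have S: "\<sigma> \<in> carrier_mat D D" using sd unfolding density_op_def by auto
  obtain v l where ov: "onb D D v" and ev: "eigs D D \<sigma> v l" and l0: "\<forall>i<D. 0 \<le> l i"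
    and l1: "(\<Sum>i<D. l i) = 1" and Ss: "vN_entropy \<sigma> = - (\<Sum>i<D. l i * ln (l i))"
    using density_spectral[OF sd] by blast
  define e where "e c x = (if c = x then 1 else 0 :: complex)" for c x :: nat
  have oe: "onb d d e" unfolding onb_def e_def by (simp add: if01_mult sum.delta)
  define W where "W j = tens d (v (j div d)) (e (j mod d))" for j
  define m where "m j = l (j div d) / real d" for j
  have oW: "onb (D*d) (D*d) W" unfolding W_def by (rule onb_tens[OF ov oe])
  have eW: "eigs (D*d) (D*d) \<rho> W m" unfolding eigs_def
  proof (intro allI impI)
    fix j x assume j: "j < D*d" and x: "x < D*d"
    have jd: "j div d < D" "j mod d < d" using j dpos by (auto simp: less_mult_imp_div_less)
    have xd: "x div d < D" "x mod d < d" using x dpos by (auto simp: less_mult_imp_div_less)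
    have inner: "(\<Sum>y2<d. (if x mod d = y2 then 1 / of_nat d else 0) * e (j mod d) y2) = e (j mod d) (x mod d) / of_nat d"
    proof -
      have "(\<Sum>y2<d. (if x mod d = y2 then 1 / of_nat d else 0) * e (j mod d) y2)
          = (\<Sum>y2<d. if x mod d = y2 then e (j mod d) y2 / of_nat d else 0)"
        by (intro sum.cong refl) simp
      also have "\<dots> = e (j mod d) (x mod d) / of_nat d" using xd by (simp add: sum.delta)
      finally show ?thesis .
    qed
    have "(\<Sum>y<D*d. \<rho> $$ (x,y) * W j y) = (\<Sum>y1<D. \<Sum>y2<d. \<rho> $$ (x, y1*d+y2) * W j (y1*d+y2))"
      by (rule sum_split2)
    also have "\<dots> = (\<Sum>y1<D. \<Sum>y2<d. \<sigma> $$ (x div d, y1) * v (j div d) y1 * ((if x mod d = y2 then 1 / of_nat d else 0) * e (j mod d) y2))"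
    proof (intro sum.cong refl)
      fix y1 y2 assume "y1 \<in> {..<D}" "y2 \<in> {..<d}"
      then have y: "y1 < D" "y2 < d" by auto
      have "y1*d+y2 < D*d" using idx2_lt[OF y] .
      then show "\<rho> $$ (x, y1*d+y2) * W j (y1*d+y2) = \<sigma> $$ (x div d, y1) * v (j div d) y1 * ((if x mod d = y2 then 1 / of_nat d else 0) * e (j mod d) y2)"
        using y x unfolding W_def by (simp add: ent tens_idx)
    qed
    also have "\<dots> = (\<Sum>y1<D. \<sigma> $$ (x div d, y1) * v (j div d) y1) * (\<Sum>y2<d. (if x mod d = y2 then 1 / of_nat d else 0) * e (j mod d) y2)"
      by (simp only: sum_product)
    also have "\<dots> = (\<Sum>y1<D. \<sigma> $$ (x div d, y1) * v (j div d) y1) * (e (j mod d) (x mod d) / of_nat d)"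
      using inner by simp
    also have "\<dots> = of_real (l (j div d)) * v (j div d) (x div d) * (e (j mod d) (x mod d) / of_nat d)"
      using ev jd xd unfolding eigs_def by simp
    also have "\<dots> = of_real (m x') * W j x" if "x' = j" for x' using that
      unfolding m_def W_def tens_def by simp
    finally show "(\<Sum>y<D*d. \<rho> $$ (x,y) * W j y) = of_real (m j) * W j x" by simp
  qed
  have "vN_entropy \<rho> = - (\<Sum>j<D*d. m j * ln (m j))" by (rule entropy_onb[OF R oW eW])
  also have "(\<Sum>j<D*d. m j * ln (m j)) = (\<Sum>i<D. \<Sum>c<d. l i / real d * ln (l i / real d))"
    unfolding sum_split2 m_def by simp
  also have "\<dots> = (\<Sum>i<D. l i * ln (l i) - l i * ln (real d))"
  proof (intro sum.cong refl)
    fix i assume i: "i \<in> {..<D}"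
    show "(\<Sum>c<d. l i / real d * ln (l i / real d)) = l i * ln (l i) - l i * ln (real d)"
    proof (cases "l i = 0")
      case True then show ?thesis by simp
    next
      case False
      then have "0 < l i" using l0 i by (simp add: less_le)
      then show ?thesis using dpos by (simp add: ln_div algebra_simps)
    qed
  qed
  also have "\<dots> = (\<Sum>i<D. l i * ln (l i)) - ln (real d)"
    using l1 by (simp add: sum_subtractf sum_distrib_right[symmetric])
  finally show ?thesis using Ss by simp
qed


definition Bk :: "nat \<Rightarrow> nat \<Rightarrow> complex mat \<Rightarrow> nat \<Rightarrow> nat \<Rightarrow> complex mat" where
  "Bk d N U p q = blk (d ^ p) (d ^ q) (d ^ (N - p - q)) U"

lemma Bk_density:
  assumes "density_op (d ^ N) U" "p + q \<le> N"
  shows "density_op (d ^ q) (Bk d N U p q)"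
proof -
  have "d ^ p * d ^ q * d ^ (N - p - q) = d ^ N"
    using assms(2) by (simp flip: power_add)
  then show ?thesis unfolding Bk_def using blk_density[of "d ^ p" "d ^ q" "d ^ (N - p - q)" U] assms(1) by simp
qed

lemma Bk_split1:
  assumes "p + q1 + q2 \<le> N"
  shows "blk 1 (d ^ q1) (d ^ q2) (Bk d N U p (q1 + q2)) = Bk d N U p q1"
proof -
  have e1: "1 * d ^ q1 * d ^ q2 = d ^ (q1 + q2)" by (simp add: power_add)
  have e2: "d ^ q2 * d ^ (N - p - (q1 + q2)) = d ^ (N - p - q1)"
    using assms by (simp flip: power_add)
  show ?thesis unfolding Bk_def using blk_comp[of 1 "d ^ q1" "d ^ q2" "d ^ p" "d ^ (N - p - (q1 + q2))" U]
    unfolding e1 e2 by simp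
qed

lemma Bk_split2:
  assumes "p + q1 + q2 \<le> N"
  shows "blk (d ^ q1) (d ^ q2) 1 (Bk d N U p (q1 + q2)) = Bk d N U (p + q1) q2"
proof -
  have e1: "d ^ q1 * d ^ q2 * 1 = d ^ (q1 + q2)" by (simp add: power_add)
  have e2: "d ^ p * d ^ q1 = d ^ (p + q1)" by (simp add: power_add)
  have e3: "N - p - (q1 + q2) = N - (p + q1) - q2" by simp
  show ?thesis unfolding Bk_def using blk_comp[of "d ^ q1" "d ^ q2" 1 "d ^ p" "d ^ (N - p - (q1 + q2))" U]
    unfolding e1 e2 e3 by simp
qed

lemma Bk_dens2:
  assumes "density_op (d ^ N) U" "p + q1 + q2 \<le> N"
  shows "density_op (d ^ q1 * d ^ q2) (Bk d N U p (q1 + q2))"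
  using Bk_density[OF assms(1), of p "q1 + q2"] assms(2) by (simp add: power_add add.assoc)

lemma ent_SA:
  assumes "density_op (d ^ N) U" "p + q1 + q2 \<le> N"
  shows "vN_entropy (Bk d N U p (q1 + q2)) \<le> vN_entropy (Bk d N U p q1) + vN_entropy (Bk d N U (p + q1) q2)"
  using subadd[OF Bk_dens2[OF assms]] Bk_split1[OF assms(2)] Bk_split2[OF assms(2)] by simp

lemma ent_AL1:
  assumes "density_op (d ^ N) U" "p + q1 + q2 \<le> N"
  shows "vN_entropy (Bk d N U p q1) \<le> vN_entropy (Bk d N U p (q1 + q2)) + vN_entropy (Bk d N U (p + q1) q2)"
  using araki_lieb1[OF Bk_dens2[OF assms]] Bk_split1[OF assms(2)] Bk_split2[OF assms(2)] by simp

lemma ent_AL2: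
  assumes "density_op (d ^ N) U" "p + q1 + q2 \<le> N"
  shows "vN_entropy (Bk d N U (p + q1) q2) \<le> vN_entropy (Bk d N U p (q1 + q2)) + vN_entropy (Bk d N U p q1)"
  using araki_lieb2[OF Bk_dens2[OF assms]] Bk_split1[OF assms(2)] Bk_split2[OF assms(2)] by simp

lemma marg_Bk:
  assumes "d > 0" "p + q \<le> N"
  shows "marg d N {p..<p+q} U = Bk d N U p q"
  unfolding Bk_def by (rule marg_blk[OF assms])


lemma sum_three_parts:
  fixes f :: "nat \<Rightarrow> real"
  assumes "1 \<le> k" "k \<le> n"
  shows "(\<Sum>j=1..n. f j) = (\<Sum>j\<in>{1..<k}. f j) + f k + (\<Sum>j\<in>{k<..n}. f j)"
proof -
  have "{1..n} = {1..<k} \<union> ({k} \<union> {k<..n})" using assms by auto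
  then have "(\<Sum>j=1..n. f j) = (\<Sum>j\<in>{1..<k} \<union> ({k} \<union> {k<..n}). f j)" by simp
  also have "\<dots> = (\<Sum>j\<in>{1..<k}. f j) + (\<Sum>j\<in>{k} \<union> {k<..n}. f j)"
    by (rule sum.union_disjoint) auto
  also have "(\<Sum>j\<in>{k} \<union> {k<..n}. f j) = f k + (\<Sum>j\<in>{k<..n}. f j)"
    by (subst sum.union_disjoint) auto
  finally show ?thesis by simp
qed

lemma entropy_one:
  assumes A: "A \<in> carrier_mat 1 1" and a: "A $$ (0,0) = 1"
  shows "vN_entropy A = 0"
proof -
  have o: "onb 1 1 (\<lambda>i x. 1)" unfolding onb_def by simp
  have e: "eigs 1 1 A (\<lambda>i x. 1) (\<lambda>i. 1)" unfolding eigs_def using a by simp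
  show ?thesis using entropy_onb[OF A o e] by simp
qed

theorem proposition2:
  fixes d n k :: nat and U :: "complex mat"
  assumes "n \<ge> 1" and "d \<ge> 2"
    and "process_tensor d n U"
    and "1 \<le> k" and "k \<le> n"
  shows "Ncorr d n U \<le> 2 * (\<Sum>j\<in>{1..<k}. Mbar d n U j) + (\<Sum>j\<in>{k<..n}. Mbar d n U j)"
proof -
  define N where "N = 2 * n"
  have dpos: "d > 0" using assms(2) by simp
  have dU: "density_op (d ^ N) U" and to: "time_ordered d n U"
    using assms(3) unfolding process_tensor_def N_def by auto
  define B where "B p q = Bk d N U p q" for p q
  define T where "T m = vN_entropy (B 0 (2*m))" for m
  define Sst where "Sst j = S_step d n U j" for j
  define So where "So j = S_out d n U j" for j
  define Si where "Si j = S_in d n U j" for j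
  have margB: "marg d N {p..<p+q} U = B p q" if "p + q \<le> N" for p q
    unfolding B_def by (rule marg_Bk[OF dpos that])
  have Sst_B: "Sst j = vN_entropy (B (2*j-2) 2)" if "1 \<le> j" "j \<le> n" for j
  proof -
    have "{2*j-2, 2*j-1} = {2*j-2..<2*j-2+2}" using that by auto
    then show ?thesis unfolding Sst_def S_step_def N_def[symmetric] using margB[of "2*j-2" 2] that N_def by simp
  qed
  have So_B: "So j = vN_entropy (B (2*j-1) 1)" if "1 \<le> j" "j \<le> n" for j
  proof -
    have "{2*j-1} = {2*j-1..<2*j-1+1}" using that by auto
    then show ?thesis unfolding So_def S_out_def N_def[symmetric] using margB[of "2*j-1" 1] that N_def by simp
  qed
  have Si_B: "Si j = vN_entropy (B (2*j-2) 1)" if "1 \<le> j" "j \<le> n" for j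
  proof -
    have "{2*j-2} = {2*j-2..<2*j-2+1}" using that by auto
    then show ?thesis unfolding Si_def S_in_def N_def[symmetric] using margB[of "2*j-2" 1] that N_def by simp
  qed
  have lnd: "ln (real (d ^ 1)) = ln (real d)" by simp
  have So_le: "So j \<le> ln (real d)" if "1 \<le> j" "j \<le> n" for j
    using So_B[OF that] entropy_le_ln[OF Bk_density[OF dU, of "2*j-1" 1]] that unfolding B_def N_def by simp
  have Si_le: "Si j \<le> ln (real d)" if "1 \<le> j" "j \<le> n" for j
    using Si_B[OF that] entropy_le_ln[OF Bk_density[OF dU, of "2*j-2" 1]] that unfolding B_def N_def by simp
  have F1: "T j \<le> T (j-1) + Sst j" if "1 \<le> j" "j \<le> n" for j
  proof -
    have "vN_entropy (B 0 ((2*j-2) + 2)) \<le> vN_entropy (B 0 (2*j-2)) + vN_entropy (B (0 + (2*j-2)) 2)"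
      unfolding B_def by (rule ent_SA[OF dU]) (use that N_def in simp)
    moreover have "(2*j-2) + 2 = 2*j" "2*j-2 = 2*(j-1)" using that by auto
    ultimately show ?thesis unfolding T_def using Sst_B[OF that] by simp
  qed
  have F2: "vN_entropy (B 0 (2*j-1)) \<le> T j + So j" if "1 \<le> j" "j \<le> n" for j
  proof -
    have "vN_entropy (B 0 (2*j-1)) \<le> vN_entropy (B 0 ((2*j-1) + 1)) + vN_entropy (B (0 + (2*j-1)) 1)"
      unfolding B_def by (rule ent_AL1[OF dU]) (use that N_def in simp)
    moreover have "(2*j-1) + 1 = 2*j" using that by auto
    ultimately show ?thesis unfolding T_def using So_B[OF that] by simp
  qed
  have F3: "Sst k \<le> T k + T (k-1)"
  proof -
    have "vN_entropy (B (0 + (2*k-2)) 2) \<le> vN_entropy (B 0 ((2*k-2) + 2)) + vN_entropy (B 0 (2*k-2))"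
      unfolding B_def by (rule ent_AL2[OF dU]) (use assms N_def in simp)
    moreover have "(2*k-2) + 2 = 2*k" "2*k-2 = 2*(k-1)" using assms by auto
    ultimately show ?thesis unfolding T_def using Sst_B[OF assms(4,5)] by simp
  qed
  have F4: "vN_entropy (B 0 (2*j-1)) = T (j-1) + ln (real d)" if "1 \<le> j" "j \<le> n" for j
  proof -
    have sd: "density_op (d ^ (2*j-2)) (B 0 (2*j-2))"
      unfolding B_def by (rule Bk_density[OF dU]) (use that N_def in simp)
    have pw: "d ^ (2*j-1) = d ^ (2*j-2) * d"
    proof -
      have e: "2*j-1 = Suc (2*j-2)" using that by simp
      show ?thesis unfolding e by (simp add: mult.commute)
    qed
    have R: "B 0 (2*j-1) \<in> carrier_mat (d ^ (2*j-2) * d) (d ^ (2*j-2) * d)"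
      unfolding B_def Bk_def pw[symmetric] by simp
    have "vN_entropy (B 0 (2*j-1)) = vN_entropy (B 0 (2*j-2)) + ln (real d)"
    proof (rule entropy_tensor_mixed[OF sd dpos R])
      fix a b assume a: "a < d ^ (2*j-2) * d" and b: "b < d ^ (2*j-2) * d"
      have jn: "j \<in> {1..n}" using that by simp
      have a': "a < d ^ (2*j-1)" and b': "b < d ^ (2*j-1)" using a b pw by auto
      have "marg d (2*n) {0..<2*j-1} U $$ (a,b) = marg d (2*n) {0..<2*j-2} U $$ (a div d, b div d) *
          (if a mod d = b mod d then 1 / of_nat d else 0)"
        using to jn a' b' unfolding time_ordered_def by blast
      moreover have "marg d (2*n) {0..<2*j-1} U = B 0 (2*j-1)" using margB[of 0 "2*j-1"] that N_def by simp
      moreover have "marg d (2*n) {0..<2*j-2} U = B 0 (2*j-2)" using margB[of 0 "2*j-2"] that N_def by simp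
      ultimately show "B 0 (2*j-1) $$ (a,b) = B 0 (2*j-2) $$ (a div d, b div d) * (if a mod d = b mod d then 1 / of_nat d else 0)"
        by simp
    qed
    moreover have "2*j-2 = 2*(j-1)" using that by auto
    ultimately show ?thesis unfolding T_def by simp
  qed
  have T0: "T 0 = 0"
  proof -
    have C1: "B 0 0 \<in> carrier_mat 1 1" unfolding B_def Bk_def by simp
    have "B 0 0 $$ (0,0) = (\<Sum>z<d ^ N. U $$ (z,z))" unfolding B_def Bk_def by (simp add: blk_entry)
    also have "\<dots> = 1" using dU unfolding density_op_def mtrace_def by auto
    finally have "vN_entropy (B 0 0) = 0" by (rule entropy_one[OF C1])
    then show ?thesis unfolding T_def by simp
  qed
  have Tn: "T n = vN_entropy U"
  proof -
    have "B 0 N = U" unfolding B_def Bk_def using dU blk_id[of U "d ^ N"] unfolding density_op_def by simp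
    then show ?thesis unfolding T_def N_def by simp
  qed
  have chainA: "T m \<le> (\<Sum>j\<in>{1..m}. Sst j)" if "m \<le> n" for m
    using that
  proof (induction m)
    case 0 then show ?case using T0 by simp
  next
    case (Suc m)
    have "T (Suc m) \<le> T m + Sst (Suc m)" using F1[of "Suc m"] Suc.prems by simp
    also have "\<dots> \<le> (\<Sum>j\<in>{1..m}. Sst j) + Sst (Suc m)" using Suc by simp
    finally show ?case by simp
  qed
  have chainB: "T k + (\<Sum>j\<in>{k<..m}. ln (real d) - So j) \<le> T m" if "k \<le> m" "m \<le> n" for m
    using that
  proof (induction m)
    case 0 then show ?case using assms by simp
  next
    case (Suc m)
    show ?case
    proof (cases "k = Suc m")
      case True then show ?thesis by simp
    next
      case False
      then have km: "k \<le> m" using Suc.prems by simp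
      have IH: "T k + (\<Sum>j\<in>{k<..m}. ln (real d) - So j) \<le> T m" using Suc.IH km Suc.prems by simp
      have "T m + ln (real d) - So (Suc m) \<le> T (Suc m)"
        using F2[of "Suc m"] F4[of "Suc m"] Suc.prems by simp
      moreover have "{k<..Suc m} = insert (Suc m) {k<..m}" using km by auto
      ultimately show ?thesis using IH by simp
    qed
  qed
  define A where "A = (\<Sum>j\<in>{1..<k}. Sst j)"
  define C where "C = (\<Sum>j\<in>{k<..n}. Sst j + So j - ln (real d))"
  have hA: "T (k-1) \<le> A"
  proof -
    have "{1..k-1} = {1..<k}" using assms by auto
    then show ?thesis using chainA[of "k-1"] assms unfolding A_def by simp
  qed
  have hB: "T k + (\<Sum>j\<in>{k<..n}. ln (real d) - So j) \<le> T n" using chainB[of n] assms by simp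
  have "Ncorr d n U = A + Sst k + (\<Sum>j\<in>{k<..n}. Sst j) - T n"
    unfolding Ncorr_def A_def Sst_def using sum_three_parts[OF assms(4,5)] Tn by simp
  also have "\<dots> \<le> 2 * A + C"
  proof -
    have "(\<Sum>j\<in>{k<..n}. Sst j) - (\<Sum>j\<in>{k<..n}. ln (real d) - So j) = C"
      unfolding C_def by (simp add: sum_subtractf sum.distrib)
    then show ?thesis using hA hB F3 by linarith
  qed
  also have "\<dots> \<le> 2 * (\<Sum>j\<in>{1..<k}. Mbar d n U j) + (\<Sum>j\<in>{k<..n}. Mbar d n U j)"
  proof -
    have "A \<le> (\<Sum>j\<in>{1..<k}. Mbar d n U j)" unfolding A_def
    proof (rule sum_mono)
      fix j assume "j \<in> {1..<k}"
      then have j: "1 \<le> j" "j \<le> n" using assms by auto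
      show "Sst j \<le> Mbar d n U j" using So_le[OF j] Si_le[OF j]
        unfolding Mbar_def Mcorr_def Sst_def So_def Si_def by simp
    qed
    moreover have "C \<le> (\<Sum>j\<in>{k<..n}. Mbar d n U j)" unfolding C_def
    proof (rule sum_mono)
      fix j assume "j \<in> {k<..n}"
      then have j: "1 \<le> j" "j \<le> n" using assms by auto
      show "Sst j + So j - ln (real d) \<le> Mbar d n U j" using So_le[OF j] Si_le[OF j]
        unfolding Mbar_def Mcorr_def Sst_def So_def Si_def by simp
    qed
    ultimately show ?thesis by simp
  qed
  finally show ?thesis .
qed


end
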